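(* For every triangle $K$, $$P^3(K)=\mathcal N(K)\oplus\big(\mathcal S(K)\oplus\langle 1^K\rangle\big),$$ where both sums are direct and $\mathcal N(K)$ is $L^2$-orthogonal to $\mathcal S(K)\oplus\langle1^K\rangle$.
   Context: For a triangle $K\subset\mathbb R^2$ and $k\ge0$, $P^k(K)$ denotes the set of functions which coincide with a polynomial of degree at most $k$ on $K$ and vanish outside $K$; $|K|$ is the area of $K$. For a vertex $\mathbf V$ of $K$, the sting function $\mathfrak s_{\mathbf VK}\in P^3(K)$ is the unique element such that $\int_K\mathfrak s_{\mathbf VK}\,q\,dx\,dy=\frac{|K|}{100}q(\mathbf V)$ for all polynomials $q$ of degree at most $3$. $\mathcal S(K)=\langle\mathfrak s_{\mathbf V_1K},\mathfrak s_{\mathbf V_2K},\mathfrak s_{\mathbf V_3K}\rangle$ where $\mathbf V_1,\mathbf V_2,\mathbf V_3$ are the vertices of $K$. $\mathcal B(K)=\{\mathbf v\in[P^4(K)]^2:\mathbf v=\mathbf 0\text{ on }\partial K\}$ and $\mathcal N(K)=\{\operatorname{div}\mathbf v:\mathbf v\in\mathcal B(K)\}$. $1^K\in P^3(K)$ is the function equal to $1$ on $K$, and $\langle\cdot\rangle$ denotes linear span. *)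

theory Defs
  imports "HOL-Analysis.Analysis"
begin

type_synonym pt = "real \<times> real"

definition poly2 :: "nat \<Rightarrow> (pt \<Rightarrow> real) \<Rightarrow> bool" where
  "poly2 k p \<longleftrightarrow> (\<exists>c :: nat \<Rightarrow> nat \<Rightarrow> real.
     \<forall>x y. p (x, y) = (\<Sum>i\<le>k. \<Sum>j\<le>k - i. c i j * x ^ i * y ^ j))"

definition ext0 :: "pt set \<Rightarrow> (pt \<Rightarrow> real) \<Rightarrow> (pt \<Rightarrow> real)" where
  "ext0 K p = (\<lambda>z. if z \<in> K then p z else 0)"

definition Pk :: "nat \<Rightarrow> pt set \<Rightarrow> (pt \<Rightarrow> real) set" where
  "Pk k K = {f. \<exists>p. poly2 k p \<and> f = ext0 K p}"

definition sting :: "pt \<Rightarrow> pt set \<Rightarrow> (pt \<Rightarrow> real)" where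
  "sting V K = (THE s. s \<in> Pk 3 K \<and>
     (\<forall>q. poly2 3 q \<longrightarrow> integral K (\<lambda>z. s z * q z) = measure lebesgue K / 100 * q V))"

definition Sspace :: "pt \<Rightarrow> pt \<Rightarrow> pt \<Rightarrow> (pt \<Rightarrow> real) set" where
  "Sspace a b c = (let K = convex hull {a, b, c} in
     {(\<lambda>z. \<alpha> * sting a K z + \<beta> * sting b K z + \<gamma> * sting c K z) | \<alpha> \<beta> \<gamma>. True})"

definition ConstSpan :: "pt set \<Rightarrow> (pt \<Rightarrow> real) set" where
  "ConstSpan K = {(\<lambda>z. t * ext0 K (\<lambda>_. 1) z) | t. True}"

text \<open>An element v of [P^4(K)]^2 is the zero extension of a pair of
  quartic polynomials (p1,p2) on K; v = 0 on the boundary of K means p1 = p2 = 0 on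
  frontier K; its divergence is the zero extension of dp1/dx + dp2/dy.\<close>
definition Nspace :: "pt set \<Rightarrow> (pt \<Rightarrow> real) set" where
  "Nspace K = {f. \<exists>p1 p2. poly2 4 p1 \<and> poly2 4 p2 \<and>
      (\<forall>z\<in>frontier K. p1 z = 0 \<and> p2 z = 0) \<and>
      f = ext0 K (\<lambda>z. deriv (\<lambda>t. p1 (t, snd z)) (fst z) + deriv (\<lambda>t. p2 (fst z, t)) (snd z))}"

definition fsum :: "(pt \<Rightarrow> real) set \<Rightarrow> (pt \<Rightarrow> real) set \<Rightarrow> (pt \<Rightarrow> real) set" where
  "fsum A B = {(\<lambda>z. f z + g z) | f g. f \<in> A \<and> g \<in> B}"

end

theory Submission
  imports Defs
begin

definition Tk :: "nat \<Rightarrow> (nat \<times> nat) set" where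
  "Tk k = {(i,j). i + j \<le> k}"

lemma finite_Tk: "finite (Tk k)"
proof -
  have "Tk k \<subseteq> {..k} \<times> {..k}" by (auto simp: Tk_def)
  then show ?thesis by (rule finite_subset) auto
qed

lemma sum_Tk: "(\<Sum>i\<le>k. \<Sum>j\<le>k - i. f i j) = (\<Sum>(i,j)\<in>Tk k. f i j)"
proof -
  have "Sigma {..k} (\<lambda>i. {..k-i}) = Tk k" by (auto simp: Tk_def)
  then show ?thesis by (simp add: sum.Sigma)
qed

lemma poly2_alt: "poly2 k p \<longleftrightarrow> (\<exists>c. \<forall>z. p z = (\<Sum>(i,j)\<in>Tk k. c i j * fst z ^ i * snd z ^ j))"
  unfolding poly2_def
proof (intro iffI; elim exE; intro exI allI)
  fix c z assume h: "\<forall>x y. p (x, y) = (\<Sum>i\<le>k. \<Sum>j\<le>k - i. c i j * x ^ i * y ^ j)"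
  show "p z = (\<Sum>(i,j)\<in>Tk k. c i j * fst z ^ i * snd z ^ j)"
    using h[rule_format, of "fst z" "snd z"] by (simp add: sum_Tk)
next
  fix c x y assume h: "\<forall>z. p z = (\<Sum>(i,j)\<in>Tk k. c i j * fst z ^ i * snd z ^ j)"
  show "p (x, y) = (\<Sum>i\<le>k. \<Sum>j\<le>k - i. c i j * x ^ i * y ^ j)"
    using h[rule_format, of "(x,y)"] by (simp add: sum_Tk)
qed

lemma poly2_mono:
  assumes "poly2 k p" "k \<le> l" shows "poly2 l p"
proof -
  obtain c where c: "\<And>z. p z = (\<Sum>(i,j)\<in>Tk k. c i j * fst z ^ i * snd z ^ j)"
    using assms(1) by (auto simp: poly2_alt)
  define d where "d i j = (if i + j \<le> k then c i j else 0)" for i j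
  have "p z = (\<Sum>(i,j)\<in>Tk l. d i j * fst z ^ i * snd z ^ j)" for z
  proof -
    have sub: "Tk k \<subseteq> Tk l" using assms(2) by (auto simp: Tk_def)
    have "(\<Sum>(i,j)\<in>Tk l. d i j * fst z ^ i * snd z ^ j) = (\<Sum>(i,j)\<in>Tk k. d i j * fst z ^ i * snd z ^ j)"
      by (rule sum.mono_neutral_right[OF finite_Tk sub]) (auto simp: d_def Tk_def split: if_splits)
    also have "\<dots> = (\<Sum>(i,j)\<in>Tk k. c i j * fst z ^ i * snd z ^ j)"
      by (rule sum.cong) (auto simp: d_def Tk_def)
    finally show ?thesis using c by simp
  qed
  then show ?thesis by (auto simp: poly2_alt)
qed

lemma poly2_add:
  assumes "poly2 k p" "poly2 k q" shows "poly2 k (\<lambda>z. p z + q z)"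
proof -
  obtain c where c: "\<And>z. p z = (\<Sum>(i,j)\<in>Tk k. c i j * fst z ^ i * snd z ^ j)"
    using assms(1) by (auto simp: poly2_alt)
  obtain d where d: "\<And>z. q z = (\<Sum>(i,j)\<in>Tk k. d i j * fst z ^ i * snd z ^ j)"
    using assms(2) by (auto simp: poly2_alt)
  have *: "p z + q z = (\<Sum>(i,j)\<in>Tk k. (c i j + d i j) * fst z ^ i * snd z ^ j)" for z
    unfolding c d by (simp add: sum.distrib[symmetric] split_def algebra_simps)
  show ?thesis unfolding poly2_alt by (rule exI[of _ "\<lambda>i j. c i j + d i j"]) (use * in auto)
qed

lemma poly2_cmul:
  assumes "poly2 k p" shows "poly2 k (\<lambda>z. r * p z)"
proof -
  obtain c where c: "\<And>z. p z = (\<Sum>(i,j)\<in>Tk k. c i j * fst z ^ i * snd z ^ j)"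
    using assms(1) by (auto simp: poly2_alt)
  have *: "r * p z = (\<Sum>(i,j)\<in>Tk k. (r * c i j) * fst z ^ i * snd z ^ j)" for z
    unfolding c by (simp add: sum_distrib_left split_def algebra_simps)
  show ?thesis unfolding poly2_alt by (rule exI[of _ "\<lambda>i j. r * c i j"]) (use * in auto)
qed

lemma poly2_1_iff: "poly2 1 p \<longleftrightarrow> (\<exists>u v w. \<forall>x y. p (x,y) = u + v * x + w * y)"
proof
  assume "poly2 1 p"
  then obtain c where c: "\<forall>x y. p (x, y) = (\<Sum>i\<le>1. \<Sum>j\<le>1 - i. c i j * x ^ i * y ^ j)"
    by (auto simp: poly2_def)
  show "\<exists>u v w. \<forall>x y. p (x,y) = u + v * x + w * y"
    by (rule exI[of _ "c 0 0"], rule exI[of _ "c 1 0"], rule exI[of _ "c 0 1"]) (simp add: c)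
next
  assume "\<exists>u v w. \<forall>x y. p (x,y) = u + v * x + w * y"
  then obtain u v w where h: "\<forall>x y. p (x,y) = u + v * x + w * y" by blast
  define c where "c i j = (if i = 0 \<and> j = 0 then u else if i = 1 \<and> j = 0 then v else if i = 0 \<and> j = 1 then w else 0)" for i j :: nat
  show "poly2 1 p" unfolding poly2_def
    by (rule exI[of _ c]) (simp add: c_def h)
qed

lemma poly2_affine: "poly2 k (\<lambda>z. u + v * fst z + w * snd z)" if "k \<ge> 1"
proof -
  have "poly2 1 (\<lambda>z. u + v * fst z + w * snd z)" unfolding poly2_1_iff by auto
  then show ?thesis using poly2_mono that by blast
qed

lemma poly2_const: "poly2 k (\<lambda>z. u)"
proof -
  have "poly2 0 (\<lambda>z. u)" unfolding poly2_def by (rule exI[of _ "\<lambda>i j. u"]) simp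
  then show ?thesis using poly2_mono by blast
qed

lemma poly2_mult:
  assumes "poly2 k p" "poly2 l q" shows "poly2 (k + l) (\<lambda>z. p z * q z)"
proof -
  obtain c where c: "\<And>z. p z = (\<Sum>(i,j)\<in>Tk k. c i j * fst z ^ i * snd z ^ j)"
    using assms(1) by (auto simp: poly2_alt)
  obtain d where d: "\<And>z. q z = (\<Sum>(i,j)\<in>Tk l. d i j * fst z ^ i * snd z ^ j)"
    using assms(2) by (auto simp: poly2_alt)
  define g :: "(nat \<times> nat) \<times> (nat \<times> nat) \<Rightarrow> nat \<times> nat" where
    "g u = (fst (fst u) + fst (snd u), snd (fst u) + snd (snd u))" for u
  define cf :: "(nat \<times> nat) \<times> (nat \<times> nat) \<Rightarrow> real" where
    "cf u = c (fst (fst u)) (snd (fst u)) * d (fst (snd u)) (snd (snd u))" for u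
  define e where "e m n = (\<Sum>u\<in>{u\<in>Tk k \<times> Tk l. g u = (m,n)}. cf u)" for m n
  have fin: "finite (Tk k \<times> Tk l)" using finite_Tk by auto
  have *: "p z * q z = (\<Sum>(m,n)\<in>Tk (k+l). e m n * fst z ^ m * snd z ^ n)" for z
  proof -
    let ?h = "\<lambda>u. cf u * fst z ^ fst (g u) * snd z ^ snd (g u)"
    have "p z * q z = (\<Sum>u\<in>Tk k. \<Sum>v\<in>Tk l. (c (fst u) (snd u) * fst z ^ fst u * snd z ^ snd u) *
         (d (fst v) (snd v) * fst z ^ fst v * snd z ^ snd v))"
      unfolding c d by (simp add: sum_product split_def)
    also have "\<dots> = (\<Sum>u\<in>Tk k \<times> Tk l. ?h u)"
      unfolding sum.cartesian_product
      by (rule sum.cong) (auto simp: cf_def g_def power_add algebra_simps)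
    also have "\<dots> = (\<Sum>w\<in>Tk (k+l). \<Sum>u\<in>{u\<in>Tk k \<times> Tk l. g u = w}. ?h u)"
      by (rule sum.group[symmetric, OF fin finite_Tk]) (auto simp: g_def Tk_def)
    also have "\<dots> = (\<Sum>w\<in>Tk (k+l). e (fst w) (snd w) * fst z ^ fst w * snd z ^ snd w)"
    proof (rule sum.cong[OF refl])
      fix w assume "w \<in> Tk (k+l)"
      have "(\<Sum>u\<in>{u\<in>Tk k \<times> Tk l. g u = w}. ?h u) =
            (\<Sum>u\<in>{u\<in>Tk k \<times> Tk l. g u = w}. cf u * fst z ^ fst w * snd z ^ snd w)"
        by (rule sum.cong) auto
      also have "\<dots> = e (fst w) (snd w) * fst z ^ fst w * snd z ^ snd w"
        unfolding e_def by (simp add: sum_distrib_right)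
      finally show "(\<Sum>u\<in>{u\<in>Tk k \<times> Tk l. g u = w}. ?h u) = e (fst w) (snd w) * fst z ^ fst w * snd z ^ snd w" .
    qed
    finally show ?thesis by (simp add: split_def)
  qed
  show ?thesis unfolding poly2_alt by (rule exI[of _ e]) (use * in auto)
qed

lemma sum_Tk_shift1:
  assumes "k \<ge> 1" "\<And>j. f 0 j = 0"
  shows "(\<Sum>(i,j)\<in>Tk k. f i j) = (\<Sum>(i,j)\<in>Tk (k-1). f (Suc i) j)"
proof -
  have "(\<Sum>(i,j)\<in>Tk k. f i j) = (\<Sum>(i,j)\<in>Tk k - {u. fst u = 0}. f i j)"
    by (rule sum.mono_neutral_right[OF finite_Tk]) (auto simp: assms)
  also have "Tk k - {u. fst u = 0} = (\<lambda>u. (Suc (fst u), snd u)) ` Tk (k-1)"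
  proof
    show "Tk k - {u. fst u = 0} \<subseteq> (\<lambda>u. (Suc (fst u), snd u)) ` Tk (k-1)"
    proof
      fix u assume "u \<in> Tk k - {u. fst u = 0}"
      then obtain i j where u: "u = (Suc i, j)" "Suc i + j \<le> k"
        by (cases u) (auto simp: Tk_def gr0_conv_Suc)
      then show "u \<in> (\<lambda>u. (Suc (fst u), snd u)) ` Tk (k-1)"
        by (intro image_eqI[of _ _ "(i,j)"]) (auto simp: Tk_def)
    qed
    show "(\<lambda>u. (Suc (fst u), snd u)) ` Tk (k-1) \<subseteq> Tk k - {u. fst u = 0}"
      using assms(1) by (auto simp: Tk_def)
  qed
  also have "(\<Sum>(i,j)\<in>(\<lambda>u. (Suc (fst u), snd u)) ` Tk (k-1). f i j) = (\<Sum>(i,j)\<in>Tk (k-1). f (Suc i) j)"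
    by (subst sum.reindex) (auto simp: inj_on_def split_def)
  finally show ?thesis .
qed

lemma sum_Tk_shift2:
  assumes "k \<ge> 1" "\<And>i. f i 0 = 0"
  shows "(\<Sum>(i,j)\<in>Tk k. f i j) = (\<Sum>(i,j)\<in>Tk (k-1). f i (Suc j))"
proof -
  have "(\<Sum>(i,j)\<in>Tk k. f i j) = (\<Sum>(i,j)\<in>Tk k - {u. snd u = 0}. f i j)"
    by (rule sum.mono_neutral_right[OF finite_Tk]) (auto simp: assms)
  also have "Tk k - {u. snd u = 0} = (\<lambda>u. (fst u, Suc (snd u))) ` Tk (k-1)"
  proof
    show "Tk k - {u. snd u = 0} \<subseteq> (\<lambda>u. (fst u, Suc (snd u))) ` Tk (k-1)"
    proof
      fix u assume "u \<in> Tk k - {u. snd u = 0}"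
      then obtain i j where u: "u = (i, Suc j)" "i + Suc j \<le> k"
        by (cases u) (auto simp: Tk_def gr0_conv_Suc)
      then show "u \<in> (\<lambda>u. (fst u, Suc (snd u))) ` Tk (k-1)"
        by (intro image_eqI[of _ _ "(i,j)"]) (auto simp: Tk_def)
    qed
    show "(\<lambda>u. (fst u, Suc (snd u))) ` Tk (k-1) \<subseteq> Tk k - {u. snd u = 0}"
      using assms(1) by (auto simp: Tk_def)
  qed
  also have "(\<Sum>(i,j)\<in>(\<lambda>u. (fst u, Suc (snd u))) ` Tk (k-1). f i j) = (\<Sum>(i,j)\<in>Tk (k-1). f i (Suc j))"
    by (subst sum.reindex) (auto simp: inj_on_def split_def)
  finally show ?thesis .
qed



definition Dx :: "(pt \<Rightarrow> real) \<Rightarrow> pt \<Rightarrow> real" where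
  "Dx p z = deriv (\<lambda>t. p (t, snd z)) (fst z)"
definition Dy :: "(pt \<Rightarrow> real) \<Rightarrow> pt \<Rightarrow> real" where
  "Dy p z = deriv (\<lambda>t. p (fst z, t)) (snd z)"

lemma poly2_derivs:
  assumes "poly2 k p"
  shows "poly2 (k-1) (Dx p)" "poly2 (k-1) (Dy p)"
    "\<And>x y. ((\<lambda>t. p (t,y)) has_real_derivative Dx p (x,y)) (at x)"
    "\<And>x y. ((\<lambda>t. p (x,t)) has_real_derivative Dy p (x,y)) (at y)"
    "\<And>a d. ((\<lambda>t. p (fst a + t * fst d, snd a + t * snd d)) has_real_derivative
          (Dx p a * fst d + Dy p a * snd d)) (at 0)"
    "continuous_on S p"
proof -
  obtain c where c: "\<And>z. p z = (\<Sum>(i,j)\<in>Tk k. c i j * fst z ^ i * snd z ^ j)"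
    using assms(1) by (auto simp: poly2_alt)
  define dx where "dx z = (\<Sum>(i,j)\<in>Tk k. c i j * (of_nat i * fst z ^ (i-1)) * snd z ^ j)" for z
  define dy where "dy z = (\<Sum>(i,j)\<in>Tk k. c i j * fst z ^ i * (of_nat j * snd z ^ (j-1)))" for z
  have px: "((\<lambda>t. p (t,y)) has_real_derivative dx (x,y)) (at x)" for x y
  proof -
    have e: "(\<lambda>t. p (t,y)) = (\<lambda>t. \<Sum>u\<in>Tk k. c (fst u) (snd u) * t ^ fst u * y ^ snd u)"
      by (simp add: c split_def)
    show ?thesis unfolding e dx_def split_def
      by (rule DERIV_sum) (auto intro!: derivative_eq_intros)
  qed
  have py: "((\<lambda>t. p (x,t)) has_real_derivative dy (x,y)) (at y)" for x y
  proof -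
    have e: "(\<lambda>t. p (x,t)) = (\<lambda>t. \<Sum>u\<in>Tk k. c (fst u) (snd u) * x ^ fst u * t ^ snd u)"
      by (simp add: c split_def)
    show ?thesis unfolding e dy_def split_def
      by (rule DERIV_sum) (auto intro!: derivative_eq_intros)
  qed
  have Dxe: "Dx p = dx"
  proof (rule ext)
    fix z show "Dx p z = dx z" using DERIV_imp_deriv[OF px[where x="fst z" and y="snd z"]] by (simp add: Dx_def)
  qed
  have Dye: "Dy p = dy"
  proof (rule ext)
    fix z show "Dy p z = dy z" using DERIV_imp_deriv[OF py[where x="fst z" and y="snd z"]] by (simp add: Dy_def)
  qed
  show "\<And>x y. ((\<lambda>t. p (t,y)) has_real_derivative Dx p (x,y)) (at x)" using px Dxe by simp
  show "\<And>x y. ((\<lambda>t. p (x,t)) has_real_derivative Dy p (x,y)) (at y)" using py Dye by simp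
  show "poly2 (k-1) (Dx p)"
  proof (cases "k \<ge> 1")
    case True
    have "dx z = (\<Sum>(i,j)\<in>Tk (k-1). (of_nat (Suc i) * c (Suc i) j) * fst z ^ i * snd z ^ j)" for z
    proof -
      have "dx z = (\<Sum>(i,j)\<in>Tk (k-1). (\<lambda>i j. c i j * (of_nat i * fst z ^ (i-1)) * snd z ^ j) (Suc i) j)"
        unfolding dx_def by (rule sum_Tk_shift1[OF True]) simp
      also have "\<dots> = (\<Sum>(i,j)\<in>Tk (k-1). (of_nat (Suc i) * c (Suc i) j) * fst z ^ i * snd z ^ j)"
        by (rule sum.cong) (auto simp: mult_ac)
      finally show ?thesis .
    qed
    then show ?thesis unfolding Dxe poly2_alt by (intro exI[of _ "\<lambda>i j. of_nat (Suc i) * c (Suc i) j"]) auto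
  next
    case False
    then have T0: "Tk k = {(0,0)}" by (auto simp: Tk_def)
    have "dx = (\<lambda>z. 0)" unfolding dx_def T0 by simp
    then show ?thesis using poly2_const Dxe by simp
  qed
  show "poly2 (k-1) (Dy p)"
  proof (cases "k \<ge> 1")
    case True
    have "dy z = (\<Sum>(i,j)\<in>Tk (k-1). (of_nat (Suc j) * c i (Suc j)) * fst z ^ i * snd z ^ j)" for z
    proof -
      have "dy z = (\<Sum>(i,j)\<in>Tk (k-1). (\<lambda>i j. c i j * fst z ^ i * (of_nat j * snd z ^ (j-1))) i (Suc j))"
        unfolding dy_def by (rule sum_Tk_shift2[OF True]) simp
      also have "\<dots> = (\<Sum>(i,j)\<in>Tk (k-1). (of_nat (Suc j) * c i (Suc j)) * fst z ^ i * snd z ^ j)"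
        by (rule sum.cong) (auto simp: mult_ac)
      finally show ?thesis .
    qed
    then show ?thesis unfolding Dye poly2_alt by (intro exI[of _ "\<lambda>i j. of_nat (Suc j) * c i (Suc j)"]) auto
  next
    case False
    then have T0: "Tk k = {(0,0)}" by (auto simp: Tk_def)
    have "dy = (\<lambda>z. 0)" unfolding dy_def T0 by simp
    then show ?thesis using poly2_const Dye by simp
  qed
  show "continuous_on S p"
  proof -
    have e: "p = (\<lambda>z. \<Sum>u\<in>Tk k. c (fst u) (snd u) * fst z ^ fst u * snd z ^ snd u)"
      by (rule ext) (simp add: c split_def)
    show ?thesis unfolding e by (intro continuous_intros)
  qed
  fix a d :: pt
  have trm: "((\<lambda>t. C * (a1 + t*d1)^i * (a2 + t*d2)^j) has_real_derivative
     (C * (of_nat i * a1^(i-1) * d1) * a2^j + C * a1^i * (of_nat j * a2^(j-1) * d2))) (at 0)"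
    for C a1 a2 d1 d2 :: real and i j :: nat
    apply (rule derivative_eq_intros refl)+
    apply simp
    done
  have e: "(\<lambda>t. p (fst a + t * fst d, snd a + t * snd d)) = (\<lambda>t. \<Sum>u\<in>Tk k. c (fst u) (snd u) *
       (fst a + t * fst d) ^ fst u * (snd a + t * snd d) ^ snd u)"
    by (simp add: c split_def)
  have "((\<lambda>t. p (fst a + t * fst d, snd a + t * snd d)) has_real_derivative
      (\<Sum>u\<in>Tk k. c (fst u) (snd u) * (of_nat (fst u) * fst a ^ (fst u - 1) * fst d) * snd a ^ snd u
        + c (fst u) (snd u) * fst a ^ fst u * (of_nat (snd u) * snd a ^ (snd u - 1) * snd d))) (at 0)"
    unfolding e by (rule DERIV_sum) (rule trm)
  moreover have "(\<Sum>u\<in>Tk k. c (fst u) (snd u) * (of_nat (fst u) * fst a ^ (fst u - 1) * fst d) * snd a ^ snd u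
        + c (fst u) (snd u) * fst a ^ fst u * (of_nat (snd u) * snd a ^ (snd u - 1) * snd d))
      = Dx p a * fst d + Dy p a * snd d"
    unfolding Dxe Dye dx_def dy_def split_def sum_distrib_right sum.distrib[symmetric]
    by (rule sum.cong) (simp_all add: mult_ac)
  ultimately show "((\<lambda>t. p (fst a + t * fst d, snd a + t * snd d)) has_real_derivative
          (Dx p a * fst d + Dy p a * snd d)) (at 0)" by simp
qed

lemma integrable_cont:
  fixes f :: "'a::euclidean_space \<Rightarrow> real"
  assumes "compact S" "continuous_on S f" shows "f integrable_on S"
  using set_borel_integral_eq_integral(1) borel_integrable_compact[OF assms]
  unfolding set_integrable_def by blast

lemma integral_pos_zero:
  fixes f :: "pt \<Rightarrow> real"
  assumes "compact S" "continuous_on S f" "\<forall>z\<in>S. 0 \<le> f z" "integral S f = 0" "z \<in> interior S"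
  shows "f z = 0"
proof -
  obtain e where e: "e > 0" "ball z e \<subseteq> S" using assms(5) by (meson mem_interior)
  define r where "r = e/3"
  have r: "r > 0" using e by (simp add: r_def)
  define B where "B = cbox (fst z - r, snd z - r) (fst z + r, snd z + r)"
  have Beq: "B = cbox (fst z - r) (fst z + r) \<times> cbox (snd z - r) (snd z + r)"
    unfolding B_def by (simp add: cbox_Pair_eq)
  have BS: "B \<subseteq> S"
  proof
    fix w assume "w \<in> B"
    then have w: "\<bar>fst w - fst z\<bar> \<le> r" "\<bar>snd w - snd z\<bar> \<le> r"
      unfolding Beq by (auto simp: abs_le_iff)
    have "dist z w = norm (fst z - fst w, snd z - snd w)"
      by (cases z, cases w) (simp add: dist_norm)
    also have "\<dots> \<le> norm (fst z - fst w) + norm (snd z - snd w)" by (rule norm_Pair_le)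
    also have "\<dots> < e" using w e unfolding r_def by (simp add: abs_minus_commute)
    finally show "w \<in> S" using e(2) by auto
  qed
  have cS: "continuous_on B f" using assms(2) BS continuous_on_subset by blast
  have iB: "f integrable_on B" unfolding B_def by (rule integrable_continuous) (use cS B_def in simp)
  have iS: "f integrable_on S" by (rule integrable_cont[OF assms(1,2)])
  have "integral B f \<le> integral S f"
    by (rule integral_subset_le[OF BS iB iS assms(3)])
  moreover have "integral B f \<ge> 0"
    by (rule integral_nonneg[OF iB]) (use BS assms(3) in auto)
  ultimately have "integral B f = 0" using assms(4) by simp
  then have hi: "(f has_integral 0) B" using iB by (metis has_integral_integral)
  have zB: "z \<in> B" unfolding Beq using r by (cases z) auto
  have bne: "box (fst z - r, snd z - r) (fst z + r, snd z + r) \<noteq> {}"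
    using r by (simp add: box_ne_empty inner_Pair_0 Basis_prod_def)
  show ?thesis
    by (rule has_integral_0_cbox_imp_0[of "(fst z - r, snd z - r)" "(fst z + r, snd z + r)" f z])
       (use cS hi zB bne BS assms(3) in \<open>auto simp: B_def dest: box_subset_cbox[THEN subsetD]\<close>)
qed

lemma not_interior_aff:
  fixes f :: "pt \<Rightarrow> real"
  assumes "\<forall>w\<in>S. f w \<ge> 0" "\<And>w. f w = \<alpha> + \<beta> * fst w + \<gamma> * snd w" "f z = 0" "f V > 0"
  shows "z \<notin> interior S"
proof
  assume "z \<in> interior S"
  then obtain e where e: "e > 0" "ball z e \<subseteq> S" by (meson mem_interior)
  define t where "t = e / (2 * (norm (z - V) + 1))"
  have pos: "2 * (norm (z - V) + 1) > 0" by (smt (verit) norm_ge_zero)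
  then have t: "t > 0" using e by (simp add: t_def)
  define w where "w = z + t *\<^sub>R (z - V)"
  have "dist z w = t * norm (z - V)" using t by (simp add: w_def dist_norm)
  also have "\<dots> < e"
  proof -
    have "t * norm (z - V) \<le> t * (norm (z - V) + 1)" using t by simp
    also have "\<dots> = e / 2" unfolding t_def using pos by (simp add: field_simps)
    finally show ?thesis using e by simp
  qed
  finally have "w \<in> S" using e by auto
  moreover have "f w = (1 + t) * f z - t * f V"
    unfolding assms(2) w_def by (simp add: algebra_simps)
  then have "f w < 0" using assms(3,4) t by simp
  ultimately show False using assms(1) by force
qed


lemma line_int_zero:
  fixes T :: "real set" and q q' :: "real \<Rightarrow> real"
  assumes T: "compact T" "convex T"
    and d: "\<And>x. (q has_real_derivative q' x) (at x)"
    and c: "continuous_on UNIV q'"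
    and bd: "\<And>x. x \<in> T \<Longrightarrow> (\<And>e. e > 0 \<Longrightarrow> \<exists>x'. \<bar>x' - x\<bar> < e \<and> x' \<notin> T) \<Longrightarrow> q x = 0"
  shows "(LINT x|lborel. indicator T x *\<^sub>R q' x) = 0"
proof (cases "T = {}")
  case True then show ?thesis by simp
next
  case False
  define l where "l = Inf T"
  define r where "r = Sup T"
  have bdd: "bdd_below T" "bdd_above T"
    using compact_imp_bounded[OF T(1)] bounded_imp_bdd_below bounded_imp_bdd_above by auto
  have lT: "l \<in> T" "r \<in> T"
    using closed_contains_Inf closed_contains_Sup False bdd compact_imp_closed[OF T(1)]
    unfolding l_def r_def by auto
  have Teq: "T = {l..r}"
  proof
    show "T \<subseteq> {l..r}" using bdd by (auto simp: l_def r_def intro: cInf_lower cSup_upper)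
    show "{l..r} \<subseteq> T"
    proof
      fix x assume "x \<in> {l..r}"
      then have "l \<le> x" "x \<le> r" by auto
      moreover have "is_interval T" using is_interval_convex_1 T(2) by simp
      ultimately show "x \<in> T" using lT unfolding is_interval_1 by blast
    qed
  qed
  have lr: "l \<le> r" using lT Teq by auto
  have ql: "q l = 0"
  proof (rule bd[OF lT(1)])
    fix e :: real assume "e > 0"
    then show "\<exists>x'. \<bar>x' - l\<bar> < e \<and> x' \<notin> T" using Teq by (intro exI[of _ "l - e/2"]) auto
  qed
  have qr: "q r = 0"
  proof (rule bd[OF lT(2)])
    fix e :: real assume "e > 0"
    then show "\<exists>x'. \<bar>x' - r\<bar> < e \<and> x' \<notin> T" using Teq by (intro exI[of _ "r + e/2"]) auto
  qed
  have i: "integrable lborel (\<lambda>x. indicator T x *\<^sub>R q' x)"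
    by (rule borel_integrable_compact[OF T(1) continuous_on_subset[OF c]]) auto
  have "(LINT x|lborel. indicator T x *\<^sub>R q' x) = integral T q'"
    using set_borel_integral_eq_integral(2)[of T q'] i
    unfolding set_integrable_def set_lebesgue_integral_def by simp
  also have "integral T q' = q r - q l"
  proof -
    have "(q' has_integral q r - q l) {l..r}"
      by (rule fundamental_theorem_of_calculus[OF lr])
         (use d in \<open>auto simp: has_real_derivative_iff_has_vector_derivative[symmetric] intro: has_field_derivative_at_within\<close>)
    then show ?thesis using Teq by (simp add: integral_unique)
  qed
  finally show ?thesis using ql qr by simp
qed

lemma slice_frontier:
  fixes S :: "pt set"
  assumes "(x, y) \<in> S" "\<And>e. e > 0 \<Longrightarrow> \<exists>x'. \<bar>x' - x\<bar> < e \<and> (x', y) \<notin> S"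
  shows "(x, y) \<in> frontier S"
proof -
  have "(x, y) \<notin> interior S"
  proof
    assume "(x, y) \<in> interior S"
    then obtain e where e: "e > 0" "ball (x, y) e \<subseteq> S" by (meson mem_interior)
    then obtain x' where "\<bar>x' - x\<bar> < e" "(x', y) \<notin> S" using assms(2) by blast
    moreover have "(x', y) \<in> ball (x, y) e" using calculation by (simp add: dist_Pair_Pair dist_real_def abs_minus_commute)
    ultimately show False using e by auto
  qed
  then show ?thesis using assms(1) closure_subset by (auto simp: frontier_def)
qed

lemma slice_frontier2:
  fixes S :: "pt set"
  assumes "(x, y) \<in> S" "\<And>e. e > 0 \<Longrightarrow> \<exists>y'. \<bar>y' - y\<bar> < e \<and> (x, y') \<notin> S"
  shows "(x, y) \<in> frontier S"
proof -
  have "(x, y) \<notin> interior S"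
  proof
    assume "(x, y) \<in> interior S"
    then obtain e where e: "e > 0" "ball (x, y) e \<subseteq> S" by (meson mem_interior)
    then obtain y' where "\<bar>y' - y\<bar> < e" "(x, y') \<notin> S" using assms(2) by blast
    moreover have "(x, y') \<in> ball (x, y) e" using calculation by (simp add: dist_Pair_Pair dist_real_def abs_minus_commute)
    ultimately show False using e by auto
  qed
  then show ?thesis using assms(1) closure_subset by (auto simp: frontier_def)
qed

lemma integral_Dx_zero:
  assumes S: "compact S" "convex S" and p: "poly2 k p" and fr: "\<forall>z\<in>frontier S. p z = 0"
  shows "integral S (Dx p) = 0"
proof -
  have cD: "continuous_on A (Dx p)" for A using poly2_derivs(6)[OF poly2_derivs(1)[OF p]] .
  have i2: "integrable lborel (\<lambda>z. indicator S z *\<^sub>R Dx p z)" by (rule borel_integrable_compact[OF S(1) cD])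
  have "integral S (Dx p) = (LINT z|lborel. indicator S z *\<^sub>R Dx p z)"
    using set_borel_integral_eq_integral(2)[of S "Dx p"] i2
    unfolding set_integrable_def set_lebesgue_integral_def by simp
  also have "\<dots> = (LINT z|(lborel \<Otimes>\<^sub>M lborel). indicator S z *\<^sub>R Dx p z)" by (simp add: lborel_prod)
  also have "\<dots> = (LINT y|lborel. LINT x|lborel. indicator S (x,y) *\<^sub>R Dx p (x,y))"
  proof -
    have int2: "integrable (lborel \<Otimes>\<^sub>M lborel) (\<lambda>(x,y). indicator S (x,y) *\<^sub>R Dx p (x,y))"
      using i2 by (simp add: lborel_prod split_def)
    have eq: "(\<lambda>(x,y). indicator S (x,y) *\<^sub>R Dx p (x,y)) = (\<lambda>z. indicator S z *\<^sub>R Dx p z)" by auto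
    show ?thesis using pair_sigma_finite.integral_snd[OF lborel_pair.pair_sigma_finite_axioms int2] unfolding eq by simp
  qed
  also have "\<dots> = (LINT y|lborel. 0)"
  proof -
    have "(LINT x|lborel. indicator S (x,y) *\<^sub>R Dx p (x,y)) = 0" for y
    proof -
    define T where "T = fst ` (S \<inter> {z. snd z = y})"
    have Tiff: "x \<in> T \<longleftrightarrow> (x, y) \<in> S" for x unfolding T_def by force
    have ind: "indicator S (x,y) = (indicator T x :: real)" for x using Tiff by (simp add: indicator_def)
    have cT: "compact T" unfolding T_def
      by (intro compact_continuous_image continuous_intros compact_Int_closed S(1) closed_Collect_eq)
    have vT: "convex T" unfolding T_def
    proof (intro convex_linear_image convex_Int S(2))
      show "linear fst" by (rule linear_fst)
      show "convex {z :: pt. snd z = y}"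
      proof (rule convexI)
        fix z w :: pt and u v :: real
        assume "z \<in> {z. snd z = y}" "w \<in> {z. snd z = y}" "0 \<le> u" "0 \<le> v" "u + v = 1"
        then have "snd (u *\<^sub>R z + v *\<^sub>R w) = u * y + v * y" by simp
        also have "\<dots> = (u + v) * y" by (rule distrib_right[symmetric])
        finally have "snd (u *\<^sub>R z + v *\<^sub>R w) = (u + v) * y" .
        then show "u *\<^sub>R z + v *\<^sub>R w \<in> {z. snd z = y}" using \<open>u + v = 1\<close> by simp
      qed
    qed
    have "(LINT x|lborel. indicator T x *\<^sub>R Dx p (x,y)) = 0"
    proof (rule line_int_zero[OF cT vT, of "\<lambda>t. p (t, y)"])
      show "\<And>x. ((\<lambda>t. p (t, y)) has_real_derivative Dx p (x, y)) (at x)" by (rule poly2_derivs(3)[OF p])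
      show "continuous_on UNIV (\<lambda>x. Dx p (x, y))"
        by (rule continuous_on_compose2[OF cD[of UNIV] continuous_on_Pair[OF continuous_on_id continuous_on_const]]) simp
      fix x assume "x \<in> T" "\<And>e. e > 0 \<Longrightarrow> \<exists>x'. \<bar>x' - x\<bar> < e \<and> x' \<notin> T"
      then have "(x, y) \<in> frontier S" using Tiff by (intro slice_frontier) auto
      then show "p (x, y) = 0" using fr by auto
    qed
    then show ?thesis by (simp add: ind)
  qed
  then show ?thesis by simp
  qed
  finally show ?thesis by simp
qed

lemma integral_Dy_zero:
  assumes S: "compact S" "convex S" and p: "poly2 k p" and fr: "\<forall>z\<in>frontier S. p z = 0"
  shows "integral S (Dy p) = 0"
proof -
  have cD: "continuous_on A (Dy p)" for A using poly2_derivs(6)[OF poly2_derivs(2)[OF p]] .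
  have i2: "integrable lborel (\<lambda>z. indicator S z *\<^sub>R Dy p z)" by (rule borel_integrable_compact[OF S(1) cD])
  have "integral S (Dy p) = (LINT z|lborel. indicator S z *\<^sub>R Dy p z)"
    using set_borel_integral_eq_integral(2)[of S "Dy p"] i2
    unfolding set_integrable_def set_lebesgue_integral_def by simp
  also have "\<dots> = (LINT z|(lborel \<Otimes>\<^sub>M lborel). indicator S z *\<^sub>R Dy p z)" by (simp add: lborel_prod)
  also have "\<dots> = (LINT x|lborel. LINT y|lborel. indicator S (x,y) *\<^sub>R Dy p (x,y))"
  proof -
    have int2: "integrable (lborel \<Otimes>\<^sub>M lborel) (\<lambda>(x,y). indicator S (x,y) *\<^sub>R Dy p (x,y))"
      using i2 by (simp add: lborel_prod split_def)
    have eq: "(\<lambda>(x,y). indicator S (x,y) *\<^sub>R Dy p (x,y)) = (\<lambda>z. indicator S z *\<^sub>R Dy p z)" by auto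
    show ?thesis using pair_sigma_finite.integral_fst[OF lborel_pair.pair_sigma_finite_axioms int2] unfolding eq by simp
  qed
  also have "\<dots> = (LINT x|lborel. 0)"
  proof -
    have "(LINT y|lborel. indicator S (x,y) *\<^sub>R Dy p (x,y)) = 0" for x
    proof -
    define T where "T = snd ` (S \<inter> {z. fst z = x})"
    have Tiff: "y \<in> T \<longleftrightarrow> (x, y) \<in> S" for y unfolding T_def by force
    have ind: "indicator S (x,y) = (indicator T y :: real)" for y using Tiff by (simp add: indicator_def)
    have cT: "compact T" unfolding T_def
      by (intro compact_continuous_image continuous_intros compact_Int_closed S(1) closed_Collect_eq)
    have vT: "convex T" unfolding T_def
    proof (intro convex_linear_image convex_Int S(2))
      show "linear snd" by (rule linear_snd)
      show "convex {z :: pt. fst z = x}"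
      proof (rule convexI)
        fix z w :: pt and u v :: real
        assume "z \<in> {z. fst z = x}" "w \<in> {z. fst z = x}" "0 \<le> u" "0 \<le> v" "u + v = 1"
        then have "fst (u *\<^sub>R z + v *\<^sub>R w) = u * x + v * x" by simp
        also have "\<dots> = (u + v) * x" by (rule distrib_right[symmetric])
        finally have "fst (u *\<^sub>R z + v *\<^sub>R w) = (u + v) * x" .
        then show "u *\<^sub>R z + v *\<^sub>R w \<in> {z. fst z = x}" using \<open>u + v = 1\<close> by simp
      qed
    qed
    have "(LINT y|lborel. indicator T y *\<^sub>R Dy p (x,y)) = 0"
    proof (rule line_int_zero[OF cT vT, of "\<lambda>t. p (x, t)"])
      show "\<And>y. ((\<lambda>t. p (x, t)) has_real_derivative Dy p (x, y)) (at y)" by (rule poly2_derivs(4)[OF p])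
      show "continuous_on UNIV (\<lambda>y. Dy p (x, y))"
        by (rule continuous_on_compose2[OF cD[of UNIV] continuous_on_Pair[OF continuous_on_const continuous_on_id]]) simp
      fix y assume "y \<in> T" "\<And>e. e > 0 \<Longrightarrow> \<exists>y'. \<bar>y' - y\<bar> < e \<and> y' \<notin> T"
      then have "(x, y) \<in> frontier S" using Tiff by (intro slice_frontier2) auto
      then show "p (x, y) = 0" using fr by auto
    qed
    then show ?thesis by (simp add: ind)
  qed
  then show ?thesis by simp
  qed
  finally show ?thesis by simp
qed

lemma aff_comb:
  fixes f :: "pt \<Rightarrow> real"
  assumes "\<And>z. f z = \<alpha> + \<beta> * fst z + \<gamma> * snd z" "u + v + w = 1"
  shows "f (u *\<^sub>R a + v *\<^sub>R b + w *\<^sub>R c) = u * f a + v * f b + w * f c"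
proof -
  have "f (u *\<^sub>R a + v *\<^sub>R b + w *\<^sub>R c) = (u + v + w) * \<alpha> + \<beta> * (u * fst a + v * fst b + w * fst c) + \<gamma> * (u * snd a + v * snd b + w * snd c)"
    using assms(2) by (simp add: assms(1))
  also have "\<dots> = u * f a + v * f b + w * f c" by (simp add: assms(1) algebra_simps)
  finally show ?thesis .
qed

lemma integral_pos:
  fixes f :: "pt \<Rightarrow> real"
  assumes "compact S" "continuous_on S f" "\<forall>z\<in>S. 0 \<le> f z" "z \<in> interior S" "f z > 0"
  shows "integral S f > 0"
proof -
  have "integral S f \<ge> 0" by (rule integral_nonneg[OF integrable_cont[OF assms(1,2)]]) (use assms(3) in auto)
  moreover have "integral S f \<noteq> 0" using integral_pos_zero[OF assms(1-3) _ assms(4)] assms(5) by auto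
  ultimately show ?thesis by simp
qed

locale tri =
  fixes a b c :: pt
  assumes nc: "\<not> collinear {a, b, c}"
begin

definition Dt where "Dt = (fst b - fst a) * (snd c - snd a) - (snd b - snd a) * (fst c - fst a)"

lemma Dt_nz: "Dt \<noteq> 0"
proof
  assume D0: "Dt = 0"
  define x where "x = a - b"
  define y where "y = c - b"
  have "fst x * snd y - snd x * fst y = - Dt" unfolding Dt_def x_def y_def by (simp add: algebra_simps)
  then have cr: "fst x * snd y = snd x * fst y" using D0 by simp
  have "collinear {0, a - b, c - b}"
    unfolding x_def[symmetric] y_def[symmetric] collinear_lemma
  proof (cases "x = 0")
    case False
    show "x = 0 \<or> y = 0 \<or> (\<exists>c. y = c *\<^sub>R x)"
    proof (cases "fst x = 0")
      case True
      then have "snd x \<noteq> 0" using False by (simp add: prod_eq_iff)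
      then have "fst y = 0" using cr True by simp
      then have "y = (snd y / snd x) *\<^sub>R x" using True \<open>snd x \<noteq> 0\<close> by (simp add: prod_eq_iff)
      then show ?thesis by blast
    next
      case False
      have "snd y = fst y / fst x * snd x" using cr False by (simp add: field_simps)
      then have "y = (fst y / fst x) *\<^sub>R x" using False by (simp add: prod_eq_iff)
      then show ?thesis by blast
    qed
  qed simp
  then show False using nc collinear_3[of a b c] by simp
qed

definition "la z = ((fst b - fst z) * (snd c - snd z) - (snd b - snd z) * (fst c - fst z)) / Dt"
definition "lb z = ((fst c - fst z) * (snd a - snd z) - (snd c - snd z) * (fst a - fst z)) / Dt"
definition "lc z = ((fst a - fst z) * (snd b - snd z) - (snd a - snd z) * (fst b - fst z)) / Dt"

definition "A0 = (fst b * snd c - snd b * fst c) / Dt"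
definition "A1 = (snd b - snd c) / Dt"
definition "A2 = (fst c - fst b) / Dt"
definition "B0 = (fst c * snd a - snd c * fst a) / Dt"
definition "B1 = (snd c - snd a) / Dt"
definition "B2 = (fst a - fst c) / Dt"
definition "C0 = (fst a * snd b - snd a * fst b) / Dt"
definition "C1 = (snd a - snd b) / Dt"
definition "C2 = (fst b - fst a) / Dt"

lemma la_aff: "la z = A0 + A1 * fst z + A2 * snd z"
  unfolding la_def A0_def A1_def A2_def using Dt_nz by (simp add: field_simps)
lemma lb_aff: "lb z = B0 + B1 * fst z + B2 * snd z"
  unfolding lb_def B0_def B1_def B2_def using Dt_nz by (simp add: field_simps)
lemma lc_aff: "lc z = C0 + C1 * fst z + C2 * snd z"
  unfolding lc_def C0_def C1_def C2_def using Dt_nz by (simp add: field_simps)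

lemma grad_sum: "A1 + B1 + C1 = 0" "A2 + B2 + C2 = 0"
  unfolding A1_def B1_def C1_def A2_def B2_def C2_def using Dt_nz by (simp_all add: field_simps)

lemma lsum: "la z + lb z + lc z = 1"
proof -
  have "la z + lb z + lc z = (((fst b - fst z) * (snd c - snd z) - (snd b - snd z) * (fst c - fst z))
     + ((fst c - fst z) * (snd a - snd z) - (snd c - snd z) * (fst a - fst z))
     + ((fst a - fst z) * (snd b - snd z) - (snd a - snd z) * (fst b - fst z))) / Dt"
    unfolding la_def lb_def lc_def by (simp add: add_divide_distrib)
  also have "\<dots> = Dt / Dt" by (rule arg_cong[where f="\<lambda>t. t / Dt"]) (simp add: Dt_def algebra_simps)
  finally show ?thesis using Dt_nz by simp
qed

lemma verts: "la a = 1" "la b = 0" "la c = 0" "lb a = 0" "lb b = 1" "lb c = 0" "lc a = 0" "lc b = 0" "lc c = 1"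
proof -
  have e1: "(fst b - fst a) * (snd c - snd a) - (snd b - snd a) * (fst c - fst a) = Dt" by (simp add: Dt_def)
  have e2: "(fst c - fst b) * (snd a - snd b) - (snd c - snd b) * (fst a - fst b) = Dt" by (simp add: Dt_def algebra_simps)
  have e3: "(fst a - fst c) * (snd b - snd c) - (snd a - snd c) * (fst b - fst c) = Dt" by (simp add: Dt_def algebra_simps)
  show "la a = 1" "la b = 0" "la c = 0" "lb a = 0" "lb b = 1" "lb c = 0" "lc a = 0" "lc b = 0" "lc c = 1"
    unfolding la_def lb_def lc_def using Dt_nz e1 e2 e3 by simp_all
qed

lemma lcomb:
  assumes "u + v + w = 1"
  shows "la (u *\<^sub>R a + v *\<^sub>R b + w *\<^sub>R c) = u" "lb (u *\<^sub>R a + v *\<^sub>R b + w *\<^sub>R c) = v"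
    "lc (u *\<^sub>R a + v *\<^sub>R b + w *\<^sub>R c) = w"
  using aff_comb[OF la_aff assms] aff_comb[OF lb_aff assms] aff_comb[OF lc_aff assms] verts by simp_all

lemma lrec: "z = la z *\<^sub>R a + lb z *\<^sub>R b + lc z *\<^sub>R c"
proof -
  have 1: "fst z = la z * fst a + lb z * fst b + lc z * fst c"
  proof -
    have "la z * fst a + lb z * fst b + lc z * fst c = (((fst b - fst z) * (snd c - snd z) - (snd b - snd z) * (fst c - fst z)) * fst a
     + ((fst c - fst z) * (snd a - snd z) - (snd c - snd z) * (fst a - fst z)) * fst b
     + ((fst a - fst z) * (snd b - snd z) - (snd a - snd z) * (fst b - fst z)) * fst c) / Dt"
      unfolding la_def lb_def lc_def by (simp add: add_divide_distrib)
    also have "\<dots> = (fst z * Dt) / Dt" by (rule arg_cong[where f="\<lambda>t. t / Dt"]) (simp add: Dt_def algebra_simps)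
    finally show ?thesis using Dt_nz by simp
  qed
  have 2: "snd z = la z * snd a + lb z * snd b + lc z * snd c"
  proof -
    have "la z * snd a + lb z * snd b + lc z * snd c = (((fst b - fst z) * (snd c - snd z) - (snd b - snd z) * (fst c - fst z)) * snd a
     + ((fst c - fst z) * (snd a - snd z) - (snd c - snd z) * (fst a - fst z)) * snd b
     + ((fst a - fst z) * (snd b - snd z) - (snd a - snd z) * (fst b - fst z)) * snd c) / Dt"
      unfolding la_def lb_def lc_def by (simp add: add_divide_distrib)
    also have "\<dots> = (snd z * Dt) / Dt" by (rule arg_cong[where f="\<lambda>t. t / Dt"]) (simp add: Dt_def algebra_simps)
    finally show ?thesis using Dt_nz by simp
  qed
  show ?thesis using 1 2 by (simp add: prod_eq_iff)
qed


lemma la_fun: "la = (\<lambda>z. A0 + A1 * fst z + A2 * snd z)" by (rule ext) (rule la_aff)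
lemma lb_fun: "lb = (\<lambda>z. B0 + B1 * fst z + B2 * snd z)" by (rule ext) (rule lb_aff)
lemma lc_fun: "lc = (\<lambda>z. C0 + C1 * fst z + C2 * snd z)" by (rule ext) (rule lc_aff)

lemma poly_l: "k \<ge> 1 \<Longrightarrow> poly2 k la" "k \<ge> 1 \<Longrightarrow> poly2 k lb" "k \<ge> 1 \<Longrightarrow> poly2 k lc"
  unfolding la_fun lb_fun lc_fun by (simp_all add: poly2_affine)

lemma cont_l: "continuous_on S la" "continuous_on S lb" "continuous_on S lc"
  unfolding la_fun lb_fun lc_fun by (intro continuous_intros)+

definition "K = convex hull {a, b, c}"

lemma K_eq: "K = {z. 0 \<le> la z \<and> 0 \<le> lb z \<and> 0 \<le> lc z}"
proof
  show "K \<subseteq> {z. 0 \<le> la z \<and> 0 \<le> lb z \<and> 0 \<le> lc z}"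
    unfolding K_def convex_hull_3 using lcomb by auto
  show "{z. 0 \<le> la z \<and> 0 \<le> lb z \<and> 0 \<le> lc z} \<subseteq> K"
  proof
    fix z assume h: "z \<in> {z. 0 \<le> la z \<and> 0 \<le> lb z \<and> 0 \<le> lc z}"
    show "z \<in> K" unfolding K_def convex_hull_3
      by (intro CollectI exI[of _ "la z"] exI[of _ "lb z"] exI[of _ "lc z"]) (use h lrec[of z] lsum[of z] in auto)
  qed
qed

lemma K_compact: "compact K" unfolding K_def by (rule compact_convex_hull) simp
lemma K_convex: "convex K" unfolding K_def by simp
lemma K_closed: "closed K" using K_compact compact_imp_closed by blast
lemma verts_K: "a \<in> K" "b \<in> K" "c \<in> K" unfolding K_def by (auto intro: hull_inc)

definition "U = {z. 0 < la z \<and> 0 < lb z \<and> 0 < lc z}"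

lemma U_open: "open U"
proof -
  have 1: "open {z. 0 < la z}" by (rule open_Collect_less[OF continuous_on_const cont_l(1)])
  have 2: "open {z. 0 < lb z}" by (rule open_Collect_less[OF continuous_on_const cont_l(2)])
  have 3: "open {z. 0 < lc z}" by (rule open_Collect_less[OF continuous_on_const cont_l(3)])
  have "U = {z. 0 < la z} \<inter> {z. 0 < lb z} \<inter> {z. 0 < lc z}" by (auto simp: U_def)
  then show ?thesis using 1 2 3 by (simp add: open_Int)
qed

lemma U_int: "U \<subseteq> interior K"
proof (rule interior_maximal)
  show "U \<subseteq> K" by (auto simp: U_def K_eq)
  show "open U" by (rule U_open)
qed

lemma centroid_U: "(1/3) *\<^sub>R a + (1/3) *\<^sub>R b + (1/3) *\<^sub>R c \<in> U"
  unfolding U_def using lcomb[of "1/3" "1/3" "1/3"] by simp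

lemma int_ne: "interior K \<noteq> {}" using centroid_U U_int by blast

lemma frontier_K: "z \<in> frontier K \<Longrightarrow> z \<in> K \<and> (la z = 0 \<or> lb z = 0 \<or> lc z = 0)"
proof -
  assume z: "z \<in> frontier K"
  then have zK: "z \<in> K" using K_closed frontier_subset_closed by blast
  have "z \<notin> U" using z U_int by (auto simp: frontier_def)
  then show ?thesis using zK by (auto simp: U_def K_eq)
qed

lemma edge_frontier:
  assumes "z \<in> K" "la z = 0 \<or> lb z = 0 \<or> lc z = 0"
  shows "z \<in> frontier K"
proof -
  have "z \<notin> interior K"
  proof -
    { assume h: "la z = 0"
      have ?thesis by (rule not_interior_aff[where f=la and V=a, OF _ la_aff]) (use h in \<open>auto simp: K_eq verts\<close>) }
    moreover
    { assume h: "lb z = 0"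
      have ?thesis by (rule not_interior_aff[where f=lb and V=b, OF _ lb_aff]) (use h in \<open>auto simp: K_eq verts\<close>) }
    moreover
    { assume h: "lc z = 0"
      have ?thesis by (rule not_interior_aff[where f=lc and V=c, OF _ lc_aff]) (use h in \<open>auto simp: K_eq verts\<close>) }
    ultimately show ?thesis using assms(2) by blast
  qed
  then show ?thesis using assms(1) closure_subset by (auto simp: frontier_def)
qed

definition "bub z = la z * lb z * lc z"

lemma bub_poly: "poly2 3 bub"
proof -
  have "poly2 (1 + 1 + 1) bub" unfolding bub_def
    by (intro poly2_mult poly_l) auto
  then show ?thesis by (simp add: eval_nat_numeral)
qed

lemma bub_cont: "continuous_on S bub" unfolding bub_def by (intro continuous_intros cont_l)

lemma bub_nonneg: "z \<in> K \<Longrightarrow> bub z \<ge> 0" unfolding bub_def K_eq by simp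

lemma bub_frontier: "z \<in> frontier K \<Longrightarrow> bub z = 0" unfolding bub_def using frontier_K by auto

lemma bub_verts: "bub a = 0" "bub b = 0" "bub c = 0" unfolding bub_def by (simp_all add: verts)

lemma bub_int_pos: "integral K bub > 0"
proof -
  let ?g = "(1/3) *\<^sub>R a + (1/3) *\<^sub>R b + (1/3) *\<^sub>R c"
  have "bub ?g > 0" using centroid_U unfolding U_def bub_def by simp
  moreover have "?g \<in> interior K" using centroid_U U_int by blast
  ultimately show ?thesis
    using integral_pos[OF K_compact bub_cont] bub_nonneg by blast
qed

lemma measK: "measure lebesgue K = integral K (\<lambda>z. 1)"
  by (rule lmeasure_integral) (rule lmeasurable_compact[OF K_compact])

lemma measK_pos: "measure lebesgue K > 0"
proof -
  have "(1/3) *\<^sub>R a + (1/3) *\<^sub>R b + (1/3) *\<^sub>R c \<in> interior K" using centroid_U U_int by blast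
  then have "integral K (\<lambda>z. 1::real) > 0"
    by (intro integral_pos[OF K_compact continuous_on_const]) auto
  then show ?thesis using measK by simp
qed

end

lemma deriv_zero_right:
  fixes g :: "real \<Rightarrow> real"
  assumes d: "(g has_real_derivative D) (at 0)" and z: "\<And>t. 0 \<le> t \<Longrightarrow> t \<le> 1 \<Longrightarrow> g t = 0"
  shows "D = 0"
proof -
  have "((\<lambda>h. (g (0 + h) - g 0) / h) \<longlongrightarrow> D) (at 0)" using d by (simp add: DERIV_def)
  then have L: "((\<lambda>h. (g (0 + h) - g 0) / h) \<longlongrightarrow> D) (at_right 0)"
    by (rule tendsto_mono[rotated]) (simp add: at_le)
  have ev: "eventually (\<lambda>h. (g (0 + h) - g 0) / h = 0) (at_right (0::real))"
    unfolding eventually_at_right_field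
    by (rule exI[of _ 1]) (auto simp: z)
  have T: "((\<lambda>h. 0) \<longlongrightarrow> D) (at_right (0::real))"
    by (rule Lim_transform_eventually[OF L ev])
  show ?thesis using tendsto_unique[OF trivial_limit_at_right_real T tendsto_const] by simp
qed

lemma lin2_zero:
  fixes u v d1 d2 e1 e2 :: real
  assumes "u * d1 + v * d2 = 0" "u * e1 + v * e2 = 0" "d1 * e2 - d2 * e1 \<noteq> 0"
  shows "u = 0 \<and> v = 0"
proof -
  have "u * (d1 * e2 - d2 * e1) = e2 * (u * d1 + v * d2) - d2 * (u * e1 + v * e2)" by (simp add: algebra_simps)
  then have "u * (d1 * e2 - d2 * e1) = 0" using assms by simp
  moreover have "v * (d1 * e2 - d2 * e1) = d1 * (u * e1 + v * e2) - e1 * (u * d1 + v * d2)" by (simp add: algebra_simps)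
  then have "v * (d1 * e2 - d2 * e1) = 0" using assms by simp
  ultimately show ?thesis using assms(3) by simp
qed

context tri begin

lemma verts_distinct: "a \<noteq> b" "b \<noteq> c" "a \<noteq> c"
  using verts by auto

lemma edge_deriv:
  assumes p: "poly2 k p" and fr: "\<forall>z\<in>frontier K. p z = 0"
    and seg: "\<And>t. 0 \<le> t \<Longrightarrow> t \<le> 1 \<Longrightarrow> (1 - t) *\<^sub>R V + t *\<^sub>R W \<in> frontier K"
  shows "Dx p V * (fst W - fst V) + Dy p V * (snd W - snd V) = 0"
proof -
  have "Dx p V * fst (W - V) + Dy p V * snd (W - V) = 0"
  proof (rule deriv_zero_right[OF poly2_derivs(5)[OF p, of V "W - V"]])
  fix t :: real assume t: "0 \<le> t" "t \<le> 1"
  have "(fst V + t * fst (W - V), snd V + t * snd (W - V)) = (1 - t) *\<^sub>R V + t *\<^sub>R W"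
    by (simp add: prod_eq_iff algebra_simps)
  then show "p (fst V + t * fst (W - V), snd V + t * snd (W - V)) = 0" using fr seg[OF t] by simp
  qed
  then show ?thesis by simp
qed

lemma vertex_zero:
  assumes p: "poly2 k p" and fr: "\<forall>z\<in>frontier K. p z = 0" and V: "V \<in> {a, b, c}"
  shows "Dx p V = 0 \<and> Dy p V = 0"
proof -
  have seg: "(1 - t) *\<^sub>R P + t *\<^sub>R Q \<in> frontier K"
    if "0 \<le> t" "t \<le> 1" "P \<in> {a,b,c}" "Q \<in> {a,b,c}" "P \<noteq> Q" for t P Q
  proof -
    { fix u v w :: real assume uvw: "u \<ge> 0" "v \<ge> 0" "w \<ge> 0" "u + v + w = 1" "u = 0 \<or> v = 0 \<or> w = 0"
      then have "u *\<^sub>R a + v *\<^sub>R b + w *\<^sub>R c \<in> frontier K"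
        using lcomb[OF uvw(4)] by (intro edge_frontier) (auto simp: K_eq) }
    note * = this
    show ?thesis using that
      apply (elim insertE emptyE; simp only: simp_thms)
      using *[of "1-t" t 0] *[of "1-t" 0 t] *[of t "1-t" 0] *[of 0 "1-t" t] *[of t 0 "1-t"] *[of 0 t "1-t"]
      by (auto simp: algebra_simps)
  qed
  have ab: "Dx p a * (fst b - fst a) + Dy p a * (snd b - snd a) = 0" by (rule edge_deriv[OF p fr seg]) (auto simp: verts_distinct verts_distinct[symmetric])
  have ac: "Dx p a * (fst c - fst a) + Dy p a * (snd c - snd a) = 0" by (rule edge_deriv[OF p fr seg]) (auto simp: verts_distinct verts_distinct[symmetric])
  have ba: "Dx p b * (fst a - fst b) + Dy p b * (snd a - snd b) = 0" by (rule edge_deriv[OF p fr seg]) (auto simp: verts_distinct verts_distinct[symmetric])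
  have bc: "Dx p b * (fst c - fst b) + Dy p b * (snd c - snd b) = 0" by (rule edge_deriv[OF p fr seg]) (auto simp: verts_distinct verts_distinct[symmetric])
  have ca: "Dx p c * (fst a - fst c) + Dy p c * (snd a - snd c) = 0" by (rule edge_deriv[OF p fr seg]) (auto simp: verts_distinct verts_distinct[symmetric])
  have cb: "Dx p c * (fst b - fst c) + Dy p c * (snd b - snd c) = 0" by (rule edge_deriv[OF p fr seg]) (auto simp: verts_distinct verts_distinct[symmetric])
  have d1: "(fst b - fst a) * (snd c - snd a) - (snd b - snd a) * (fst c - fst a) \<noteq> 0" using Dt_nz by (simp add: Dt_def)
  have d2: "(fst c - fst b) * (snd a - snd b) - (snd c - snd b) * (fst a - fst b) \<noteq> 0"
  proof -
    have "(fst c - fst b) * (snd a - snd b) - (snd c - snd b) * (fst a - fst b) = Dt" by (simp add: Dt_def algebra_simps)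
    then show ?thesis using Dt_nz by simp
  qed
  have d3: "(fst a - fst c) * (snd b - snd c) - (snd a - snd c) * (fst b - fst c) \<noteq> 0"
  proof -
    have "(fst a - fst c) * (snd b - snd c) - (snd a - snd c) * (fst b - fst c) = Dt" by (simp add: Dt_def algebra_simps)
    then show ?thesis using Dt_nz by simp
  qed
  show ?thesis using V lin2_zero[OF ab ac d1] lin2_zero[OF bc ba d2] lin2_zero[OF ca cb d3] by auto
qed


definition "bx z = A1 * lb z * lc z + la z * B1 * lc z + la z * lb z * C1"
definition "byy z = A2 * lb z * lc z + la z * B2 * lc z + la z * lb z * C2"
definition "dvm m1 m2 m3 m4 m5 m6 z = bx z * (m1 + m2 * fst z + m3 * snd z) + byy z * (m4 + m5 * fst z + m6 * snd z)
   + bub z * (m2 + m6)"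

lemma dvm_Dx:
  "Dx (\<lambda>z. bub z * (m1 + m2 * fst z + m3 * snd z)) z = bx z * (m1 + m2 * fst z + m3 * snd z) + bub z * m2"
proof -
  have "((\<lambda>t. bub (t, snd z) * (m1 + m2 * t + m3 * snd z)) has_real_derivative
     (bx z * (m1 + m2 * fst z + m3 * snd z) + bub z * m2)) (at (fst z))"
    unfolding bub_def bx_def la_fun lb_fun lc_fun
    by (rule derivative_eq_intros refl | simp)+ (simp add: algebra_simps)
  then show ?thesis unfolding Dx_def by (simp add: DERIV_imp_deriv)
qed

lemma dvm_Dy:
  "Dy (\<lambda>z. bub z * (m4 + m5 * fst z + m6 * snd z)) z = byy z * (m4 + m5 * fst z + m6 * snd z) + bub z * m6"
proof -
  have "((\<lambda>t. bub (fst z, t) * (m4 + m5 * fst z + m6 * t)) has_real_derivative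
     (byy z * (m4 + m5 * fst z + m6 * snd z) + bub z * m6)) (at (snd z))"
    unfolding bub_def byy_def la_fun lb_fun lc_fun
    by (rule derivative_eq_intros refl | simp)+ (simp add: algebra_simps)
  then show ?thesis unfolding Dy_def by (simp add: DERIV_imp_deriv)
qed

lemma dvm_N: "ext0 K (dvm m1 m2 m3 m4 m5 m6) \<in> Nspace K"
proof -
  let ?p1 = "\<lambda>z. bub z * (m1 + m2 * fst z + m3 * snd z)"
  let ?p2 = "\<lambda>z. bub z * (m4 + m5 * fst z + m6 * snd z)"
  have p1: "poly2 4 ?p1" using poly2_mult[OF bub_poly poly2_affine[of 1 m1 m2 m3]] by simp
  have p2: "poly2 4 ?p2" using poly2_mult[OF bub_poly poly2_affine[of 1 m4 m5 m6]] by simp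
  have fr: "\<forall>z\<in>frontier K. ?p1 z = 0 \<and> ?p2 z = 0" using bub_frontier by simp
  have e: "(\<lambda>z. deriv (\<lambda>t. ?p1 (t, snd z)) (fst z) + deriv (\<lambda>t. ?p2 (fst z, t)) (snd z)) = dvm m1 m2 m3 m4 m5 m6"
  proof (rule ext)
    fix z
    have "deriv (\<lambda>t. ?p1 (t, snd z)) (fst z) + deriv (\<lambda>t. ?p2 (fst z, t)) (snd z) = Dx ?p1 z + Dy ?p2 z"
      by (simp add: Dx_def Dy_def)
    also have "\<dots> = dvm m1 m2 m3 m4 m5 m6 z" unfolding dvm_Dx dvm_Dy dvm_def by (simp add: algebra_simps)
    finally show "deriv (\<lambda>t. ?p1 (t, snd z)) (fst z) + deriv (\<lambda>t. ?p2 (fst z, t)) (snd z) = dvm m1 m2 m3 m4 m5 m6 z" .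
  qed
  show ?thesis unfolding Nspace_def
    by (rule CollectI, rule exI[of _ ?p1], rule exI[of _ ?p2]) (use p1 p2 fr e in auto)
qed

lemma dvm_poly: "poly2 3 (dvm m1 m2 m3 m4 m5 m6)"
proof -
  let ?p1 = "\<lambda>z. bub z * (m1 + m2 * fst z + m3 * snd z)"
  let ?p2 = "\<lambda>z. bub z * (m4 + m5 * fst z + m6 * snd z)"
  have p1: "poly2 4 ?p1" using poly2_mult[OF bub_poly poly2_affine[of 1 m1 m2 m3]] by simp
  have p2: "poly2 4 ?p2" using poly2_mult[OF bub_poly poly2_affine[of 1 m4 m5 m6]] by simp
  have "poly2 3 (\<lambda>z. Dx ?p1 z + Dy ?p2 z)"
    using poly2_add[OF poly2_derivs(1)[OF p1] poly2_derivs(2)[OF p2]] by simp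
  moreover have "(\<lambda>z. Dx ?p1 z + Dy ?p2 z) = dvm m1 m2 m3 m4 m5 m6"
    by (rule ext) (unfold dvm_Dx dvm_Dy dvm_def, simp add: algebra_simps)
  ultimately show ?thesis by simp
qed

lemma AB_det: "A1 * B2 - A2 * B1 \<noteq> 0"
proof -
  have "(snd b - snd c) * (fst a - fst c) - (fst c - fst b) * (snd c - snd a) = Dt" by (simp add: Dt_def algebra_simps)
  moreover have "(A1 * B2 - A2 * B1) * (Dt * Dt) = (snd b - snd c) * (fst a - fst c) - (fst c - fst b) * (snd c - snd a)"
    unfolding A1_def A2_def B1_def B2_def using Dt_nz by (simp add: field_simps)
  ultimately show ?thesis using Dt_nz by auto
qed

lemma dvm_zero:
  assumes z: "\<forall>z\<in>K. dvm m1 m2 m3 m4 m5 m6 z = 0"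
  shows "m1 = 0 \<and> m2 = 0 \<and> m3 = 0 \<and> m4 = 0 \<and> m5 = 0 \<and> m6 = 0"
proof -
  define l1 where "l1 z = m1 + m2 * fst z + m3 * snd z" for z :: pt
  define l2 where "l2 z = m4 + m5 * fst z + m6 * snd z" for z :: pt
  define ga where "ga z = l1 z * A1 + l2 z * A2" for z
  define gb where "gb z = l1 z * B1 + l2 z * B2" for z
  define gc where "gc z = l1 z * C1 + l2 z * C2" for z
  have gaa: "ga z = (m1 * A1 + m4 * A2) + (m2 * A1 + m5 * A2) * fst z + (m3 * A1 + m6 * A2) * snd z" for z
    by (simp add: ga_def l1_def l2_def algebra_simps)
  have gba: "gb z = (m1 * B1 + m4 * B2) + (m2 * B1 + m5 * B2) * fst z + (m3 * B1 + m6 * B2) * snd z" for z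
    by (simp add: gb_def l1_def l2_def algebra_simps)
  have gca: "gc z = (m1 * C1 + m4 * C2) + (m2 * C1 + m5 * C2) * fst z + (m3 * C1 + m6 * C2) * snd z" for z
    by (simp add: gc_def l1_def l2_def algebra_simps)
  have dec: "dvm m1 m2 m3 m4 m5 m6 z = ga z * lb z * lc z + gb z * la z * lc z + gc z * la z * lb z + bub z * (m2 + m6)" for z
    by (simp add: dvm_def bx_def byy_def bub_def ga_def gb_def gc_def l1_def l2_def algebra_simps)
  have gsum: "ga z + gb z + gc z = 0" for z
  proof -
    have "ga z + gb z + gc z = l1 z * (A1 + B1 + C1) + l2 z * (A2 + B2 + C2)"
      by (simp add: ga_def gb_def gc_def algebra_simps)
    then show ?thesis using grad_sum by simp
  qed
  have pt: "dvm m1 m2 m3 m4 m5 m6 (u *\<^sub>R a + v *\<^sub>R b + w *\<^sub>R c) = 0"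
    if "u \<ge> 0" "v \<ge> 0" "w \<ge> 0" "u + v + w = 1" for u v w :: real
  proof -
    have "u *\<^sub>R a + v *\<^sub>R b + w *\<^sub>R c \<in> K" unfolding K_eq using lcomb[OF that(4)] that by simp
    then show ?thesis using z by blast
  qed
  have ea0: "ga ((2/3) *\<^sub>R b + (1/3) *\<^sub>R c) = 0"
  proof -
    have L: "la ((2/3) *\<^sub>R b + (1/3) *\<^sub>R c) = 0" "lb ((2/3) *\<^sub>R b + (1/3) *\<^sub>R c) = 2/3" "lc ((2/3) *\<^sub>R b + (1/3) *\<^sub>R c) = 1/3"
      using lcomb[of "0" "2/3" "1/3"] by simp_all
    have "dvm m1 m2 m3 m4 m5 m6 ((2/3) *\<^sub>R b + (1/3) *\<^sub>R c) = ga ((2/3) *\<^sub>R b + (1/3) *\<^sub>R c) * (2/3) * (1/3)"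
      using dec[of "(2/3) *\<^sub>R b + (1/3) *\<^sub>R c"] unfolding bub_def L by simp
    moreover have "dvm m1 m2 m3 m4 m5 m6 ((2/3) *\<^sub>R b + (1/3) *\<^sub>R c) = 0" using pt[of "0" "2/3" "1/3"] by simp
    ultimately show ?thesis by simp
  qed
  have ea0': "ga ((2/3) *\<^sub>R b + (1/3) *\<^sub>R c) = (0) * ga a + (2/3) * ga b + (1/3) * ga c"
    using aff_comb[OF gaa, of "0" "2/3" "1/3" a b c] by simp
  have ea1: "ga ((1/3) *\<^sub>R b + (2/3) *\<^sub>R c) = 0"
  proof -
    have L: "la ((1/3) *\<^sub>R b + (2/3) *\<^sub>R c) = 0" "lb ((1/3) *\<^sub>R b + (2/3) *\<^sub>R c) = 1/3" "lc ((1/3) *\<^sub>R b + (2/3) *\<^sub>R c) = 2/3"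
      using lcomb[of "0" "1/3" "2/3"] by simp_all
    have "dvm m1 m2 m3 m4 m5 m6 ((1/3) *\<^sub>R b + (2/3) *\<^sub>R c) = ga ((1/3) *\<^sub>R b + (2/3) *\<^sub>R c) * (1/3) * (2/3)"
      using dec[of "(1/3) *\<^sub>R b + (2/3) *\<^sub>R c"] unfolding bub_def L by simp
    moreover have "dvm m1 m2 m3 m4 m5 m6 ((1/3) *\<^sub>R b + (2/3) *\<^sub>R c) = 0" using pt[of "0" "1/3" "2/3"] by simp
    ultimately show ?thesis by simp
  qed
  have ea1': "ga ((1/3) *\<^sub>R b + (2/3) *\<^sub>R c) = (0) * ga a + (1/3) * ga b + (2/3) * ga c"
    using aff_comb[OF gaa, of "0" "1/3" "2/3" a b c] by simp
  have eb0: "gb ((1/3) *\<^sub>R a + (2/3) *\<^sub>R c) = 0"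
  proof -
    have L: "la ((1/3) *\<^sub>R a + (2/3) *\<^sub>R c) = 1/3" "lb ((1/3) *\<^sub>R a + (2/3) *\<^sub>R c) = 0" "lc ((1/3) *\<^sub>R a + (2/3) *\<^sub>R c) = 2/3"
      using lcomb[of "1/3" "0" "2/3"] by simp_all
    have "dvm m1 m2 m3 m4 m5 m6 ((1/3) *\<^sub>R a + (2/3) *\<^sub>R c) = gb ((1/3) *\<^sub>R a + (2/3) *\<^sub>R c) * (1/3) * (2/3)"
      using dec[of "(1/3) *\<^sub>R a + (2/3) *\<^sub>R c"] unfolding bub_def L by simp
    moreover have "dvm m1 m2 m3 m4 m5 m6 ((1/3) *\<^sub>R a + (2/3) *\<^sub>R c) = 0" using pt[of "1/3" "0" "2/3"] by simp
    ultimately show ?thesis by simp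
  qed
  have eb0': "gb ((1/3) *\<^sub>R a + (2/3) *\<^sub>R c) = (1/3) * gb a + (0) * gb b + (2/3) * gb c"
    using aff_comb[OF gba, of "1/3" "0" "2/3" a b c] by simp
  have eb1: "gb ((2/3) *\<^sub>R a + (1/3) *\<^sub>R c) = 0"
  proof -
    have L: "la ((2/3) *\<^sub>R a + (1/3) *\<^sub>R c) = 2/3" "lb ((2/3) *\<^sub>R a + (1/3) *\<^sub>R c) = 0" "lc ((2/3) *\<^sub>R a + (1/3) *\<^sub>R c) = 1/3"
      using lcomb[of "2/3" "0" "1/3"] by simp_all
    have "dvm m1 m2 m3 m4 m5 m6 ((2/3) *\<^sub>R a + (1/3) *\<^sub>R c) = gb ((2/3) *\<^sub>R a + (1/3) *\<^sub>R c) * (2/3) * (1/3)"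
      using dec[of "(2/3) *\<^sub>R a + (1/3) *\<^sub>R c"] unfolding bub_def L by simp
    moreover have "dvm m1 m2 m3 m4 m5 m6 ((2/3) *\<^sub>R a + (1/3) *\<^sub>R c) = 0" using pt[of "2/3" "0" "1/3"] by simp
    ultimately show ?thesis by simp
  qed
  have eb1': "gb ((2/3) *\<^sub>R a + (1/3) *\<^sub>R c) = (2/3) * gb a + (0) * gb b + (1/3) * gb c"
    using aff_comb[OF gba, of "2/3" "0" "1/3" a b c] by simp
  have ec0: "gc ((2/3) *\<^sub>R a + (1/3) *\<^sub>R b) = 0"
  proof -
    have L: "la ((2/3) *\<^sub>R a + (1/3) *\<^sub>R b) = 2/3" "lb ((2/3) *\<^sub>R a + (1/3) *\<^sub>R b) = 1/3" "lc ((2/3) *\<^sub>R a + (1/3) *\<^sub>R b) = 0"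
      using lcomb[of "2/3" "1/3" "0"] by simp_all
    have "dvm m1 m2 m3 m4 m5 m6 ((2/3) *\<^sub>R a + (1/3) *\<^sub>R b) = gc ((2/3) *\<^sub>R a + (1/3) *\<^sub>R b) * (2/3) * (1/3)"
      using dec[of "(2/3) *\<^sub>R a + (1/3) *\<^sub>R b"] unfolding bub_def L by simp
    moreover have "dvm m1 m2 m3 m4 m5 m6 ((2/3) *\<^sub>R a + (1/3) *\<^sub>R b) = 0" using pt[of "2/3" "1/3" "0"] by simp
    ultimately show ?thesis by simp
  qed
  have ec0': "gc ((2/3) *\<^sub>R a + (1/3) *\<^sub>R b) = (2/3) * gc a + (1/3) * gc b + (0) * gc c"
    using aff_comb[OF gca, of "2/3" "1/3" "0" a b c] by simp
  have ec1: "gc ((1/3) *\<^sub>R a + (2/3) *\<^sub>R b) = 0"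
  proof -
    have L: "la ((1/3) *\<^sub>R a + (2/3) *\<^sub>R b) = 1/3" "lb ((1/3) *\<^sub>R a + (2/3) *\<^sub>R b) = 2/3" "lc ((1/3) *\<^sub>R a + (2/3) *\<^sub>R b) = 0"
      using lcomb[of "1/3" "2/3" "0"] by simp_all
    have "dvm m1 m2 m3 m4 m5 m6 ((1/3) *\<^sub>R a + (2/3) *\<^sub>R b) = gc ((1/3) *\<^sub>R a + (2/3) *\<^sub>R b) * (1/3) * (2/3)"
      using dec[of "(1/3) *\<^sub>R a + (2/3) *\<^sub>R b"] unfolding bub_def L by simp
    moreover have "dvm m1 m2 m3 m4 m5 m6 ((1/3) *\<^sub>R a + (2/3) *\<^sub>R b) = 0" using pt[of "1/3" "2/3" "0"] by simp
    ultimately show ?thesis by simp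
  qed
  have ec1': "gc ((1/3) *\<^sub>R a + (2/3) *\<^sub>R b) = (1/3) * gc a + (2/3) * gc b + (0) * gc c"
    using aff_comb[OF gca, of "1/3" "2/3" "0" a b c] by simp
  have gab: "ga b = 0" "ga c = 0" using ea0 ea0' ea1 ea1' by linarith+
  have gbb: "gb a = 0" "gb c = 0" using eb0 eb0' eb1 eb1' by linarith+
  have gcb: "gc a = 0" "gc b = 0" using ec0 ec0' ec1 ec1' by linarith+
  have gav: "ga a = 0" using gsum[of a] gbb gcb by simp
  have gbv: "gb b = 0" using gsum[of b] gab gcb by simp
  have ga0: "ga z = 0" for z
  proof -
    have "ga (la z *\<^sub>R a + lb z *\<^sub>R b + lc z *\<^sub>R c) = la z * ga a + lb z * ga b + lc z * ga c"
      by (rule aff_comb[OF gaa lsum])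
    then show ?thesis using lrec[of z] gab gav by simp
  qed
  have gb0: "gb z = 0" for z
  proof -
    have "gb (la z *\<^sub>R a + lb z *\<^sub>R b + lc z *\<^sub>R c) = la z * gb a + lb z * gb b + lc z * gb c"
      by (rule aff_comb[OF gba lsum])
    then show ?thesis using lrec[of z] gbb gbv by simp
  qed
  have l0: "l1 z = 0 \<and> l2 z = 0" for z
    using lin2_zero[of "l1 z" A1 "l2 z" A2 B1 B2] ga0[of z] gb0[of z] AB_det
    unfolding ga_def gb_def by simp
  show ?thesis using l0[of "(0,0)"] l0[of "(1,0)"] l0[of "(0,1)"] by (simp add: l1_def l2_def)
qed

end

datatype idx = I00 | I10 | I01 | I20 | I11 | I02 | I30 | I21 | I12 | I03

lemma UNIV_idx: "(UNIV :: idx set) = {I00, I10, I01, I20, I11, I02, I30, I21, I12, I03}"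
proof -
  { fix x :: idx have "x \<in> {I00, I10, I01, I20, I11, I02, I30, I21, I12, I03}" by (cases x) auto }
  then show ?thesis by auto
qed

instance idx :: finite by standard (simp add: UNIV_idx)

fun ex :: "idx \<Rightarrow> nat \<times> nat" where
  "ex I00 = (0,0)" | "ex I10 = (1,0)" | "ex I01 = (0,1)" | "ex I20 = (2,0)" | "ex I11 = (1,1)"
| "ex I02 = (0,2)" | "ex I30 = (3,0)" | "ex I21 = (2,1)" | "ex I12 = (1,2)" | "ex I03 = (0,3)"

definition idx_of :: "nat \<times> nat \<Rightarrow> idx" where
  "idx_of u = (if u = (0,0) then I00 else if u = (1,0) then I10 else if u = (0,1) then I01
     else if u = (2,0) then I20 else if u = (1,1) then I11 else if u = (0,2) then I02
     else if u = (3,0) then I30 else if u = (2,1) then I21 else if u = (1,2) then I12 else I03)"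

lemma idx_of_ex: "idx_of (ex m) = m" by (cases m) (simp_all add: idx_of_def)

lemma Tk3: "Tk 3 = {(0,0),(1,0),(0,1),(2,0),(1,1),(0,2),(3,0),(2,1),(1,2),(0,3)}"
proof
  show "{(0,0),(1,0),(0,1),(2,0),(1,1),(0,2),(3,0),(2,1),(1,2),(0,3)} \<subseteq> Tk 3" by (auto simp: Tk_def)
  show "Tk 3 \<subseteq> {(0,0),(1,0),(0,1),(2,0),(1,1),(0,2),(3,0),(2,1),(1,2),(0,3)}"
  proof
    fix u assume "u \<in> Tk 3"
    then obtain i j where u: "u = (i,j)" "i + j \<le> 3" by (auto simp: Tk_def)
    then have "i \<le> 3" "j \<le> 3" by auto
    then have "i \<in> {0,1,2,3}" "j \<in> {0,1,2,3}" by auto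
    then show "u \<in> {(0,0),(1,0),(0,1),(2,0),(1,1),(0,2),(3,0),(2,1),(1,2),(0,3)}" using u by auto
  qed
qed

lemma ex_Tk3: "ex m \<in> Tk 3" by (cases m) (auto simp: Tk_def)

lemma sum_idx: "(\<Sum>m\<in>UNIV. f (ex m)) = (\<Sum>u\<in>Tk 3. f u)"
  by (simp add: UNIV_idx Tk3)

definition mono :: "idx \<Rightarrow> pt \<Rightarrow> real" where
  "mono m z = fst z ^ fst (ex m) * snd z ^ snd (ex m)"

definition Pc :: "real^idx \<Rightarrow> pt \<Rightarrow> real" where
  "Pc c z = (\<Sum>m\<in>UNIV. c $ m * mono m z)"

lemma poly2_mono_term:
  assumes "i + j \<le> k" shows "poly2 k (\<lambda>z. r * fst z ^ i * snd z ^ j)"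
proof -
  define cc where "cc i' j' = (if i' = i \<and> j' = j then r else 0)" for i' j'
  have "(\<Sum>(i',j')\<in>Tk k. cc i' j' * fst z ^ i' * snd z ^ j') =
        (\<Sum>u\<in>Tk k. if u = (i,j) then r * fst z ^ i * snd z ^ j else 0)" for z
    by (rule sum.cong) (auto simp: cc_def split: if_splits)
  also have "\<dots> z = r * fst z ^ i * snd z ^ j" for z
  proof -
    have "(i,j) \<in> Tk k" using assms by (simp add: Tk_def)
    then show ?thesis using sum.delta[OF finite_Tk[of k], of "(i,j)" "\<lambda>_. r * fst z ^ i * snd z ^ j"] by simp
  qed
  finally show ?thesis unfolding poly2_alt by (intro exI[of _ cc]) simp
qed

lemma poly2_sum:
  assumes "finite A" "\<And>m. m \<in> A \<Longrightarrow> poly2 k (f m)"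
  shows "poly2 k (\<lambda>z. \<Sum>m\<in>A. f m z)"
  using assms
proof (induction A rule: finite_induct)
  case empty then show ?case using poly2_const[of k 0] by simp
next
  case (insert x F)
  then show ?case using poly2_add[of k "f x" "\<lambda>z. \<Sum>m\<in>F. f m z"] by simp
qed

lemma poly2_Pc: "poly2 3 (Pc c)"
proof -
  have "poly2 3 (\<lambda>z. \<Sum>m\<in>UNIV. c $ m * mono m z)"
  proof (rule poly2_sum)
    fix m :: idx
    have "fst (ex m) + snd (ex m) \<le> 3" using ex_Tk3[of m] by (simp add: Tk_def split_def)
    then show "poly2 3 (\<lambda>z. c $ m * mono m z)"
      using poly2_mono_term[of "fst (ex m)" "snd (ex m)" 3 "c $ m"] by (simp add: mono_def mult.assoc)
  qed simp
  then show ?thesis unfolding Pc_def[abs_def] .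
qed

lemma Pc_of_poly2:
  assumes "poly2 3 p" shows "\<exists>c. p = Pc c"
proof -
  obtain cc where cc: "\<And>z. p z = (\<Sum>(i,j)\<in>Tk 3. cc i j * fst z ^ i * snd z ^ j)"
    using assms by (auto simp: poly2_alt)
  define c :: "real^idx" where "c = (\<chi> m. cc (fst (ex m)) (snd (ex m)))"
  have "p z = Pc c z" for z
  proof -
    have "Pc c z = (\<Sum>m\<in>UNIV. (\<lambda>u. cc (fst u) (snd u) * fst z ^ fst u * snd z ^ snd u) (ex m))"
      unfolding Pc_def c_def mono_def by (simp add: mult.assoc)
    also have "\<dots> = (\<Sum>u\<in>Tk 3. cc (fst u) (snd u) * fst z ^ fst u * snd z ^ snd u)" by (rule sum_idx)
    finally show ?thesis using cc[of z] by (simp add: split_def)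
  qed
  then show ?thesis by blast
qed

lemma Pc_add: "Pc (c + d) z = Pc c z + Pc d z"
  unfolding Pc_def by (simp add: sum.distrib[symmetric] algebra_simps)
lemma Pc_scale: "Pc (r *\<^sub>R c) z = r * Pc c z"
  unfolding Pc_def by (simp add: sum_distrib_left algebra_simps)
lemma Pc_zero: "Pc 0 z = 0"
  unfolding Pc_def by simp
lemma Pc_sum: "Pc (\<Sum>k\<in>A. f k) z = (\<Sum>k\<in>A. Pc (f k) z)"
  unfolding Pc_def by (simp add: sum_component sum_distrib_right sum.swap[of _ A])
lemma Pc_cont: "continuous_on S (Pc c)"
  by (rule poly2_derivs(6)[OF poly2_Pc])
lemma mono_cont: "continuous_on S (mono m)"
  unfolding mono_def by (intro continuous_intros)

lemma poly_ident:
  fixes cc :: "nat \<Rightarrow> nat \<Rightarrow> real"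
  assumes r: "r > 0"
    and h: "\<And>x y. x \<in> {x0-r<..<x0+r} \<Longrightarrow> y \<in> {y0-r<..<y0+r} \<Longrightarrow> (\<Sum>i\<le>k. \<Sum>j\<le>k-i. cc i j * x^i * y^j) = 0"
  shows "i + j \<le> k \<Longrightarrow> cc i j = 0"
proof -
  have inf: "infinite {t0-r<..<t0+r}" for t0 :: real using r by (simp add: infinite_Ioo)
  have A: "(\<Sum>j\<le>k-i. cc i j * y^j) = 0" if y: "y \<in> {y0-r<..<y0+r}" and i: "i \<le> k" for y i
  proof (rule ccontr)
    assume "(\<Sum>j\<le>k-i. cc i j * y^j) \<noteq> 0"
    then have "\<exists>i'. i' \<le> k \<and> (\<Sum>j\<le>k-i'. cc i' j * y^j) \<noteq> 0" using i by blast
    then have fin: "finite {x. (\<Sum>i\<le>k. (\<Sum>j\<le>k-i. cc i j * y^j) * x^i) = 0}" by (rule polyfun_rootbound_finite)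
    have "{x0-r<..<x0+r} \<subseteq> {x. (\<Sum>i\<le>k. (\<Sum>j\<le>k-i. cc i j * y^j) * x^i) = 0}"
    proof
      fix x assume x: "x \<in> {x0-r<..<x0+r}"
      have "(\<Sum>i\<le>k. (\<Sum>j\<le>k-i. cc i j * y^j) * x^i) = (\<Sum>i\<le>k. \<Sum>j\<le>k-i. cc i j * x^i * y^j)"
        by (simp add: sum_distrib_right sum_distrib_left mult_ac)
      then show "x \<in> {x. (\<Sum>i\<le>k. (\<Sum>j\<le>k-i. cc i j * y^j) * x^i) = 0}" using h[OF x y] by simp
    qed
    then show False using inf fin finite_subset by blast
  qed
  assume ij: "i + j \<le> k"
  show "cc i j = 0"
  proof (rule ccontr)
    assume "cc i j \<noteq> 0"
    then have "\<exists>j'. j' \<le> k - i \<and> cc i j' \<noteq> 0" using ij by (intro exI[of _ j]) auto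
    then have fin: "finite {y. (\<Sum>j\<le>k-i. cc i j * y^j) = 0}" by (rule polyfun_rootbound_finite)
    have "{y0-r<..<y0+r} \<subseteq> {y. (\<Sum>j\<le>k-i. cc i j * y^j) = 0}" using A ij by auto
    then show False using inf fin finite_subset by blast
  qed
qed

lemma Pc_ident:
  assumes "open V" "z0 \<in> V" "\<And>z. z \<in> V \<Longrightarrow> Pc c z = 0"
  shows "c = 0"
proof -
  obtain e where e: "e > 0" "ball z0 e \<subseteq> V" using assms(1,2) open_contains_ball by blast
  define r where "r = e / 2"
  have r: "r > 0" using e by (simp add: r_def)
  define cc where "cc i j = c $ idx_of (i,j)" for i j
  have rep: "Pc c z = (\<Sum>i\<le>3. \<Sum>j\<le>3-i. cc i j * fst z^i * snd z^j)" for z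
  proof -
    have "Pc c z = (\<Sum>m\<in>UNIV. (\<lambda>u. cc (fst u) (snd u) * fst z ^ fst u * snd z ^ snd u) (ex m))"
      unfolding Pc_def cc_def mono_def by (simp add: idx_of_ex mult.assoc)
    also have "\<dots> = (\<Sum>u\<in>Tk 3. cc (fst u) (snd u) * fst z ^ fst u * snd z ^ snd u)" by (rule sum_idx)
    also have "\<dots> = (\<Sum>i\<le>3. \<Sum>j\<le>3-i. cc i j * fst z^i * snd z^j)" by (simp add: sum_Tk split_def)
    finally show ?thesis .
  qed
  have h: "(\<Sum>i\<le>3. \<Sum>j\<le>3-i. cc i j * x^i * y^j) = 0"
    if "x \<in> {fst z0-r<..<fst z0+r}" "y \<in> {snd z0-r<..<snd z0+r}" for x y
  proof -
    have "dist z0 (x, y) = norm (fst z0 - x, snd z0 - y)" by (cases z0) (simp add: dist_norm)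
    also have "\<dots> \<le> norm (fst z0 - x) + norm (snd z0 - y)" by (rule norm_Pair_le)
    also have "\<dots> < e" using that unfolding r_def by (auto simp: abs_less_iff)
    finally have "(x, y) \<in> V" using e by auto
    then show ?thesis using assms(3) rep[of "(x,y)"] by simp
  qed
  have "cc i j = 0" if "i + j \<le> 3" for i j by (rule poly_ident[OF r h that])
  then have "c $ m = 0" for m using ex_Tk3[of m] idx_of_ex[of m] unfolding cc_def Tk_def
    by (metis (mono_tags, lifting) case_prodE mem_Collect_eq prod.collapse)
  then show ?thesis by (simp add: vec_eq_iff)
qed

lemma Pc_diff: "Pc (c - d) z = Pc c z - Pc d z"
  unfolding Pc_def by (simp add: sum_subtractf[symmetric] algebra_simps)

lemma ext0_in: "z \<in> S \<Longrightarrow> ext0 S p z = p z" by (simp add: ext0_def)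
lemma ext0_out: "z \<notin> S \<Longrightarrow> ext0 S p z = 0" by (simp add: ext0_def)

context tri begin

lemma int_K: "continuous_on K f \<Longrightarrow> (f::pt\<Rightarrow>real) integrable_on K" by (rule integrable_cont[OF K_compact])

lemma cont_Pcm: "continuous_on K (\<lambda>z. Pc e z * mono m z)"
  by (intro continuous_on_mult Pc_cont mono_cont)

definition gram :: "real^idx \<Rightarrow> real^idx" where
  "gram e = (\<chi> m. integral K (\<lambda>z. Pc e z * mono m z))"

lemma gram_linear: "linear gram"
proof (rule linearI)
  fix x y :: "real^idx"
  have "integral K (\<lambda>z. Pc (x + y) z * mono m z) = integral K (\<lambda>z. Pc x z * mono m z) + integral K (\<lambda>z. Pc y z * mono m z)" for m
  proof -
    have "integral K (\<lambda>z. Pc (x + y) z * mono m z) = integral K (\<lambda>z. Pc x z * mono m z + Pc y z * mono m z)"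
      by (simp add: Pc_add distrib_right)
    also have "\<dots> = integral K (\<lambda>z. Pc x z * mono m z) + integral K (\<lambda>z. Pc y z * mono m z)"
      by (rule integral_add[OF int_K[OF cont_Pcm] int_K[OF cont_Pcm]])
    finally show ?thesis .
  qed
  then show "gram (x + y) = gram x + gram y" unfolding gram_def by (simp add: vec_eq_iff)
next
  fix r :: real and x :: "real^idx"
  have "integral K (\<lambda>z. Pc (r *\<^sub>R x) z * mono m z) = r * integral K (\<lambda>z. Pc x z * mono m z)" for m
    by (simp add: Pc_scale mult.assoc)
  then show "gram (r *\<^sub>R x) = r *\<^sub>R gram x" unfolding gram_def by (simp add: vec_eq_iff)
qed

lemma gram_pair: "(\<Sum>m\<in>UNIV. d $ m * gram e $ m) = integral K (\<lambda>z. Pc e z * Pc d z)"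
proof -
  have "integral K (\<lambda>z. Pc e z * Pc d z) = integral K (\<lambda>z. \<Sum>m\<in>UNIV. d $ m * (Pc e z * mono m z))"
    unfolding Pc_def[of d] by (simp add: sum_distrib_left mult_ac)
  also have "\<dots> = (\<Sum>m\<in>UNIV. integral K (\<lambda>z. d $ m * (Pc e z * mono m z)))"
    by (rule integral_sum) (auto intro!: int_K continuous_on_mult continuous_on_const cont_Pcm)
  also have "\<dots> = (\<Sum>m\<in>UNIV. d $ m * gram e $ m)" by (simp add: gram_def)
  finally show ?thesis by simp
qed

lemma definite:
  fixes p :: "pt \<Rightarrow> real"
  assumes "continuous_on UNIV p" "integral K (\<lambda>z. p z * p z) = 0" "z \<in> K"
  shows "p z = 0"
proof -
  have "\<forall>w\<in>interior K. p w = 0"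
  proof
    fix w assume w: "w \<in> interior K"
    have "p w * p w = 0"
      by (rule integral_pos_zero[where S=K and f="\<lambda>z. p z * p z"])
         (auto intro!: continuous_on_mult continuous_on_subset[OF assms(1)] simp: K_compact assms(2) w)
    then show "p w = 0" by simp
  qed
  then have sub: "interior K \<subseteq> {w. p w = 0}" by auto
  have cl: "closed {w. p w = 0}" by (rule closed_Collect_eq[OF assms(1) continuous_on_const])
  have "closure (interior K) = K"
    using convex_closure_interior[OF K_convex int_ne] closure_closed[OF K_closed] by simp
  then have "K \<subseteq> {w. p w = 0}" using closure_minimal[OF sub cl] by simp
  then show ?thesis using assms(3) by auto
qed

lemma gram_inj: "inj gram"
  unfolding linear_inj_iff_eq_0[OF gram_linear]
proof (intro allI impI)
  fix e assume "gram e = 0"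
  then have "integral K (\<lambda>z. Pc e z * Pc e z) = 0" using gram_pair[of e e] by simp
  then have z: "Pc e z = 0" if "z \<in> interior K" for z
    using definite[OF Pc_cont] that interior_subset by blast
  obtain z0 where "z0 \<in> interior K" using int_ne by blast
  then show "e = 0" by (rule Pc_ident[OF open_interior _ z])
qed

lemma gram_surj: "surj gram" by (rule linear_inj_imp_surj[OF gram_linear gram_inj])

lemma sting_eq:
  "\<exists>\<sigma>. sting V K = ext0 K (Pc \<sigma>) \<and> (\<forall>d. integral K (\<lambda>z. Pc \<sigma> z * Pc d z) = measure lebesgue K / 100 * Pc d V)"
proof -
  obtain \<sigma> where \<sigma>: "gram \<sigma> = (\<chi> m. measure lebesgue K / 100 * mono m V)" using gram_surj by (metis surjD)
  have mom: "integral K (\<lambda>z. Pc \<sigma> z * Pc d z) = measure lebesgue K / 100 * Pc d V" for d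
  proof -
    have "integral K (\<lambda>z. Pc \<sigma> z * Pc d z) = (\<Sum>m\<in>UNIV. d $ m * gram \<sigma> $ m)" using gram_pair[of d \<sigma>] by simp
    also have "\<dots> = (\<Sum>m\<in>UNIV. measure lebesgue K / 100 * (d $ m * mono m V))" unfolding \<sigma> by (simp add: mult_ac)
    also have "\<dots> = measure lebesgue K / 100 * Pc d V" unfolding Pc_def by (simp add: sum_distrib_left)
    finally show ?thesis .
  qed
  let ?P = "\<lambda>s. s \<in> Pk 3 K \<and> (\<forall>q. poly2 3 q \<longrightarrow> integral K (\<lambda>z. s z * q z) = measure lebesgue K / 100 * q V)"
  have mom2: "integral K (\<lambda>z. ext0 K (Pc \<sigma>) z * q z) = measure lebesgue K / 100 * q V" if q3: "poly2 3 q" for q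
  proof -
    obtain d where d: "q = Pc d" using Pc_of_poly2[OF q3] by blast
    have "integral K (\<lambda>z. ext0 K (Pc \<sigma>) z * q z) = integral K (\<lambda>z. Pc \<sigma> z * Pc d z)"
      by (rule integral_cong) (simp add: ext0_in d)
    then show ?thesis using mom d by simp
  qed
  have P0: "?P (ext0 K (Pc \<sigma>))"
    using mom2 poly2_Pc unfolding Pk_def by blast
  have uniq: "s = ext0 K (Pc \<sigma>)" if Ps: "?P s" for s
  proof -
    obtain p where p: "poly2 3 p" "s = ext0 K p" using Ps unfolding Pk_def by blast
    obtain e where e: "p = Pc e" using Pc_of_poly2[OF p(1)] by blast
    let ?q = "Pc (e - \<sigma>)"
    have "integral K (\<lambda>z. s z * ?q z) = integral K (\<lambda>z. ext0 K (Pc \<sigma>) z * ?q z)"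
    proof -
      have "integral K (\<lambda>z. s z * ?q z) = measure lebesgue K / 100 * ?q V" using Ps poly2_Pc by blast
      also have "\<dots> = integral K (\<lambda>z. ext0 K (Pc \<sigma>) z * ?q z)" using mom2[OF poly2_Pc] by simp
      finally show ?thesis .
    qed
    moreover have "integral K (\<lambda>z. s z * ?q z) = integral K (\<lambda>z. Pc e z * ?q z)"
      by (rule integral_cong) (simp add: ext0_in p(2) e)
    moreover have "integral K (\<lambda>z. ext0 K (Pc \<sigma>) z * ?q z) = integral K (\<lambda>z. Pc \<sigma> z * ?q z)"
      by (rule integral_cong) (simp add: ext0_in)
    ultimately have "integral K (\<lambda>z. Pc e z * ?q z) - integral K (\<lambda>z. Pc \<sigma> z * ?q z) = 0" by simp
    then have "integral K (\<lambda>z. Pc e z * ?q z - Pc \<sigma> z * ?q z) = 0"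
      by (subst integral_diff) (auto intro!: int_K continuous_on_mult Pc_cont)
    then have "integral K (\<lambda>z. ?q z * ?q z) = 0" by (simp add: Pc_diff algebra_simps)
    then have "?q z = 0" if "z \<in> K" for z using definite[OF Pc_cont _ that] by blast
    then have "p z = Pc \<sigma> z" if "z \<in> K" for z using that by (simp add: e Pc_diff)
    then show ?thesis unfolding p(2) by (auto simp: ext0_def)
  qed
  have "sting V K = ext0 K (Pc \<sigma>)"
    unfolding sting_def by (rule the1_equality) (use P0 uniq in blast)+
  then show ?thesis using mom by blast
qed

end

context tri begin

definition "sig V = (SOME \<sigma>. sting V K = ext0 K (Pc \<sigma>) \<and>
   (\<forall>d. integral K (\<lambda>z. Pc \<sigma> z * Pc d z) = measure lebesgue K / 100 * Pc d V))"

lemma sig: "sting V K = ext0 K (Pc (sig V))"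
  "integral K (\<lambda>z. Pc (sig V) z * Pc d z) = measure lebesgue K / 100 * Pc d V"
  using someI_ex[OF sting_eq[of V]] unfolding sig_def[symmetric] by auto

lemma mom_q: "poly2 3 q \<Longrightarrow> integral K (\<lambda>z. Pc (sig V) z * q z) = measure lebesgue K / 100 * q V"
  using Pc_of_poly2 sig(2) by blast

definition "gfun \<alpha> \<beta> \<gamma> t = ext0 K (\<lambda>z. \<alpha> * Pc (sig a) z + \<beta> * Pc (sig b) z + \<gamma> * Pc (sig c) z + t)"

lemma poly_sig: "continuous_on S (Pc (sig V))" by (rule Pc_cont)

lemma SC_iff: "g \<in> fsum (Sspace a b c) (ConstSpan K) \<longleftrightarrow> (\<exists>\<alpha> \<beta> \<gamma> t. g = gfun \<alpha> \<beta> \<gamma> t)"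
proof
  assume "g \<in> fsum (Sspace a b c) (ConstSpan K)"
  then obtain \<alpha> \<beta> \<gamma> t where g: "g = (\<lambda>z. (\<alpha> * sting a K z + \<beta> * sting b K z + \<gamma> * sting c K z) + t * ext0 K (\<lambda>_. 1) z)"
    unfolding fsum_def Sspace_def ConstSpan_def Let_def K_def[symmetric] by blast
  have "g = gfun \<alpha> \<beta> \<gamma> t" unfolding g gfun_def sig(1) by (rule ext) (simp add: ext0_def)
  then show "\<exists>\<alpha> \<beta> \<gamma> t. g = gfun \<alpha> \<beta> \<gamma> t" by blast
next
  assume "\<exists>\<alpha> \<beta> \<gamma> t. g = gfun \<alpha> \<beta> \<gamma> t"
  then obtain \<alpha> \<beta> \<gamma> t where g: "g = gfun \<alpha> \<beta> \<gamma> t" by blast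
  have e: "g = (\<lambda>z. (\<lambda>z. \<alpha> * sting a K z + \<beta> * sting b K z + \<gamma> * sting c K z) z + (\<lambda>z. t * ext0 K (\<lambda>_. 1) z) z)"
    unfolding g gfun_def sig(1) by (rule ext) (simp add: ext0_def)
  show "g \<in> fsum (Sspace a b c) (ConstSpan K)"
    unfolding fsum_def Sspace_def ConstSpan_def Let_def K_def[symmetric]
    by (rule CollectI, intro exI conjI, rule e, blast, blast)
qed

lemma N_props:
  assumes "n \<in> Nspace K"
  shows "\<exists>q. poly2 3 q \<and> n = ext0 K q \<and> q a = 0 \<and> q b = 0 \<and> q c = 0 \<and> integral K q = 0"
proof -
  obtain p1 p2 where p: "poly2 4 p1" "poly2 4 p2" "\<forall>z\<in>frontier K. p1 z = 0 \<and> p2 z = 0"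
    and n: "n = ext0 K (\<lambda>z. Dx p1 z + Dy p2 z)"
    using assms unfolding Nspace_def Dx_def Dy_def by blast
  let ?q = "\<lambda>z. Dx p1 z + Dy p2 z"
  have q3: "poly2 3 ?q" using poly2_add[OF poly2_derivs(1)[OF p(1)] poly2_derivs(2)[OF p(2)]] by simp
  have fr1: "\<forall>z\<in>frontier K. p1 z = 0" and fr2: "\<forall>z\<in>frontier K. p2 z = 0" using p(3) by auto
  have v: "?q V = 0" if "V \<in> {a,b,c}" for V
    using vertex_zero[OF p(1) fr1 that] vertex_zero[OF p(2) fr2 that] by simp
  have "integral K ?q = integral K (Dx p1) + integral K (Dy p2)"
    by (rule integral_add; rule int_K; rule poly2_derivs(6); rule poly2_derivs(1,2); rule p(1,2))
  also have "\<dots> = 0"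
    using integral_Dx_zero[OF K_compact K_convex p(1) fr1] integral_Dy_zero[OF K_compact K_convex p(2) fr2] by simp
  finally show ?thesis using q3 n v by blast
qed

lemma lin4:
  fixes f1 f2 f3 f4 :: "pt \<Rightarrow> real"
  assumes "continuous_on K f1" "continuous_on K f2" "continuous_on K f3" "continuous_on K f4"
  shows "integral K (\<lambda>z. r1 * f1 z + r2 * f2 z + r3 * f3 z + r4 * f4 z) =
    r1 * integral K f1 + r2 * integral K f2 + r3 * integral K f3 + r4 * integral K f4"
proof -
  have i: "(\<lambda>z. r * f z) integrable_on K" if "continuous_on K f" for r and f :: "pt \<Rightarrow> real"
    by (rule int_K) (intro continuous_intros that)
  have "integral K (\<lambda>z. r1 * f1 z + r2 * f2 z + r3 * f3 z + r4 * f4 z) =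
     integral K (\<lambda>z. r1 * f1 z + r2 * f2 z + r3 * f3 z) + integral K (\<lambda>z. r4 * f4 z)"
    by (rule integral_add; rule int_K; intro continuous_on_add continuous_on_mult continuous_on_const assms)
  also have "integral K (\<lambda>z. r1 * f1 z + r2 * f2 z + r3 * f3 z) =
     integral K (\<lambda>z. r1 * f1 z + r2 * f2 z) + integral K (\<lambda>z. r3 * f3 z)"
    by (rule integral_add; rule int_K; intro continuous_on_add continuous_on_mult continuous_on_const assms)
  also have "integral K (\<lambda>z. r1 * f1 z + r2 * f2 z) = integral K (\<lambda>z. r1 * f1 z) + integral K (\<lambda>z. r2 * f2 z)"
    by (rule integral_add; rule int_K; intro continuous_on_add continuous_on_mult continuous_on_const assms)
  finally show ?thesis by simp
qed

lemma gfun_test: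
  assumes q: "poly2 3 q"
  shows "integral K (\<lambda>z. gfun \<alpha> \<beta> \<gamma> t z * q z) =
    measure lebesgue K / 100 * (\<alpha> * q a + \<beta> * q b + \<gamma> * q c) + t * integral K q"
proof -
  have cq: "continuous_on K q" by (rule poly2_derivs(6)[OF q])
  have "integral K (\<lambda>z. gfun \<alpha> \<beta> \<gamma> t z * q z) = integral K (\<lambda>z. \<alpha> * (Pc (sig a) z * q z)
      + \<beta> * (Pc (sig b) z * q z) + \<gamma> * (Pc (sig c) z * q z) + t * q z)"
    by (rule integral_cong) (simp add: gfun_def ext0_in algebra_simps)
  also have "\<dots> = \<alpha> * integral K (\<lambda>z. Pc (sig a) z * q z) + \<beta> * integral K (\<lambda>z. Pc (sig b) z * q z)
      + \<gamma> * integral K (\<lambda>z. Pc (sig c) z * q z) + t * integral K q"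
    by (rule lin4) (auto intro!: continuous_on_mult Pc_cont cq)
  also have "\<dots> = measure lebesgue K / 100 * (\<alpha> * q a + \<beta> * q b + \<gamma> * q c) + t * integral K q"
    using mom_q[OF q] by (simp add: algebra_simps)
  finally show ?thesis .
qed

lemma orth:
  assumes "n \<in> Nspace K"
  shows "integral K (\<lambda>z. n z * gfun \<alpha> \<beta> \<gamma> t z) = 0"
proof -
  obtain q where q: "poly2 3 q" "n = ext0 K q" "q a = 0" "q b = 0" "q c = 0" "integral K q = 0"
    using N_props[OF assms] by blast
  have "integral K (\<lambda>z. n z * gfun \<alpha> \<beta> \<gamma> t z) = integral K (\<lambda>z. gfun \<alpha> \<beta> \<gamma> t z * q z)"
    by (rule integral_cong) (simp add: q(2) ext0_in mult.commute)
  also have "\<dots> = 0" using gfun_test[OF q(1)] q by simp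
  finally show ?thesis .
qed

end

context tri begin

lemma N_zero: "(\<lambda>_. 0) \<in> Nspace K"
  unfolding Nspace_def
  by (rule CollectI, rule exI[of _ "\<lambda>_. 0"], rule exI[of _ "\<lambda>_. 0"]) (auto simp: poly2_const ext0_def fun_eq_iff)

lemma gfun_zero: "gfun 0 0 0 0 = (\<lambda>_. 0)" by (simp add: gfun_def ext0_def fun_eq_iff)

lemma Pk_sub: "Pk 3 K \<subseteq> fsum (Nspace K) (fsum (Sspace a b c) (ConstSpan K))"
proof
  define GP :: "idx \<Rightarrow> pt \<Rightarrow> real" where
    "GP k = (case k of I00 \<Rightarrow> dvm 1 0 0 0 0 0 | I10 \<Rightarrow> dvm 0 1 0 0 0 0 | I01 \<Rightarrow> dvm 0 0 1 0 0 0
      | I20 \<Rightarrow> dvm 0 0 0 1 0 0 | I11 \<Rightarrow> dvm 0 0 0 0 1 0 | I02 \<Rightarrow> dvm 0 0 0 0 0 1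
      | I30 \<Rightarrow> Pc (sig a) | I21 \<Rightarrow> Pc (sig b) | I12 \<Rightarrow> Pc (sig c) | I03 \<Rightarrow> (\<lambda>_. 1))" for k
  have GP3: "poly2 3 (GP k)" for k by (cases k) (simp_all add: GP_def dvm_poly poly2_Pc poly2_const)
  define gen where "gen k = (SOME e. GP k = Pc e)" for k
  have gen: "Pc (gen k) = GP k" for k
    using someI_ex[OF Pc_of_poly2[OF GP3[of k]]] unfolding gen_def by simp
  define L where "L w = (\<Sum>k\<in>UNIV. w $ k *\<^sub>R gen k)" for w :: "real^idx"
  have Lpc: "Pc (L w) z = dvm (w$I00) (w$I10) (w$I01) (w$I20) (w$I11) (w$I02) z
      + (w$I30 * Pc (sig a) z + w$I21 * Pc (sig b) z + w$I12 * Pc (sig c) z + w$I03)" for w z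
    unfolding L_def Pc_sum Pc_scale gen by (simp add: UNIV_idx GP_def dvm_def algebra_simps)
  have linL: "linear L"
    by (rule linearI) (simp_all add: L_def scaleR_add_left sum.distrib scaleR_sum_right)
  have injL: "inj L"
    unfolding linear_inj_iff_eq_0[OF linL]
  proof (intro allI impI)
    fix w :: "real^idx" assume L0: "L w = 0"
    define m where "m = dvm (w$I00) (w$I10) (w$I01) (w$I20) (w$I11) (w$I02)"
    have onK: "m z = - (w$I30 * Pc (sig a) z + w$I21 * Pc (sig b) z + w$I12 * Pc (sig c) z + w$I03)" for z
      using Lpc[of w z] L0 Pc_zero unfolding m_def by simp
    have "integral K (\<lambda>z. ext0 K m z * gfun (-w$I30) (-w$I21) (-w$I12) (-w$I03) z) = 0"
      unfolding m_def by (rule orth[OF dvm_N])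
    moreover have "integral K (\<lambda>z. ext0 K m z * gfun (-w$I30) (-w$I21) (-w$I12) (-w$I03) z) = integral K (\<lambda>z. m z * m z)"
      by (rule integral_cong) (simp add: gfun_def ext0_in onK)
    ultimately have "integral K (\<lambda>z. m z * m z) = 0" by simp
    then have "\<forall>z\<in>K. m z = 0" using definite[OF poly2_derivs(6)[OF dvm_poly]] unfolding m_def by blast
    then have m0: "w$I00 = 0 \<and> w$I10 = 0 \<and> w$I01 = 0 \<and> w$I20 = 0 \<and> w$I11 = 0 \<and> w$I02 = 0"
      unfolding m_def by (rule dvm_zero)
    then have rest: "w$I30 * Pc (sig a) z + w$I21 * Pc (sig b) z + w$I12 * Pc (sig c) z + w$I03 = 0" for z
      using onK[of z] unfolding m_def by (simp add: dvm_def)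
    then have gz: "gfun (w$I30) (w$I21) (w$I12) (w$I03) = (\<lambda>_. 0)" by (simp add: gfun_def ext0_def fun_eq_iff)
    have T: "measure lebesgue K / 100 * (w$I30 * q a + w$I21 * q b + w$I12 * q c) + w$I03 * integral K q = 0"
      if "poly2 3 q" for q
      using gfun_test[OF that, of "w$I30" "w$I21" "w$I12" "w$I03"] gz by simp
    have t0: "w$I03 = 0" using T[OF bub_poly] bub_verts bub_int_pos by simp
    have pl: "poly2 3 la" "poly2 3 lb" "poly2 3 lc" using poly_l[of 3] by simp_all
    have "w$I30 = 0" using T[OF pl(1)] verts t0 measK_pos by simp
    moreover have "w$I21 = 0" using T[OF pl(2)] verts t0 measK_pos by simp
    moreover have "w$I12 = 0" using T[OF pl(3)] verts t0 measK_pos by simp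
    ultimately have "w $ k = 0" for k using m0 t0 by (cases k) auto
    then show "w = 0" by (simp add: vec_eq_iff)
  qed
  have surjL: "surj L" by (rule linear_inj_imp_surj[OF linL injL])
  fix f assume "f \<in> Pk 3 K"
  then obtain p where p: "poly2 3 p" "f = ext0 K p" unfolding Pk_def by blast
  obtain e where e: "p = Pc e" using Pc_of_poly2[OF p(1)] by blast
  obtain w where w: "e = L w" using surjL by (metis surjD)
  let ?n = "ext0 K (dvm (w$I00) (w$I10) (w$I01) (w$I20) (w$I11) (w$I02))"
  let ?g = "gfun (w$I30) (w$I21) (w$I12) (w$I03)"
  have "f = (\<lambda>z. ?n z + ?g z)" unfolding p(2) e w by (simp add: fun_eq_iff ext0_def gfun_def Lpc)
  moreover have "?g \<in> fsum (Sspace a b c) (ConstSpan K)" using SC_iff by blast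
  ultimately show "f \<in> fsum (Nspace K) (fsum (Sspace a b c) (ConstSpan K))"
    unfolding fsum_def[of "Nspace K"] using dvm_N by blast
qed

lemma main:
  "Pk 3 K = fsum (Nspace K) (fsum (Sspace a b c) (ConstSpan K))
    \<and> Sspace a b c \<inter> ConstSpan K = {(\<lambda>_. 0)}
    \<and> Nspace K \<inter> fsum (Sspace a b c) (ConstSpan K) = {(\<lambda>_. 0)}
    \<and> (\<forall>n\<in>Nspace K. \<forall>g\<in>fsum (Sspace a b c) (ConstSpan K).
          integral K (\<lambda>z. n z * g z) = 0)"
proof (intro conjI)
  show D: "\<forall>n\<in>Nspace K. \<forall>g\<in>fsum (Sspace a b c) (ConstSpan K). integral K (\<lambda>z. n z * g z) = 0"
  proof (intro ballI)
    fix n g assume n: "n \<in> Nspace K" and g: "g \<in> fsum (Sspace a b c) (ConstSpan K)"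
    obtain \<alpha> \<beta> \<gamma> t where "g = gfun \<alpha> \<beta> \<gamma> t" using g SC_iff by blast
    then show "integral K (\<lambda>z. n z * g z) = 0" using orth[OF n] by simp
  qed
  show "Nspace K \<inter> fsum (Sspace a b c) (ConstSpan K) = {(\<lambda>_. 0)}"
  proof
    show "{(\<lambda>_. 0)} \<subseteq> Nspace K \<inter> fsum (Sspace a b c) (ConstSpan K)"
      using N_zero SC_iff gfun_zero by (metis Int_iff empty_subsetI insert_subset)
    show "Nspace K \<inter> fsum (Sspace a b c) (ConstSpan K) \<subseteq> {(\<lambda>_. 0)}"
    proof
      fix f assume f: "f \<in> Nspace K \<inter> fsum (Sspace a b c) (ConstSpan K)"
      then have "integral K (\<lambda>z. f z * f z) = 0" using D by blast
      obtain q where q: "poly2 3 q" "f = ext0 K q" using N_props f by blast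
      have "integral K (\<lambda>z. q z * q z) = integral K (\<lambda>z. f z * f z)"
        by (rule integral_cong) (simp add: q(2) ext0_in)
      then have "integral K (\<lambda>z. q z * q z) = 0" using \<open>integral K (\<lambda>z. f z * f z) = 0\<close> by simp
      then have "\<forall>z\<in>K. q z = 0" using definite[OF poly2_derivs(6)[OF q(1)]] by blast
      then have "f = (\<lambda>_. 0)" unfolding q(2) by (auto simp: ext0_def fun_eq_iff)
      then show "f \<in> {(\<lambda>_. 0)}" by simp
    qed
  qed
  show "Sspace a b c \<inter> ConstSpan K = {(\<lambda>_. 0)}"
  proof
    have "(\<lambda>_. 0) \<in> Sspace a b c"
      unfolding Sspace_def Let_def by (rule CollectI, rule exI[of _ 0], rule exI[of _ 0], rule exI[of _ 0]) simp
    moreover have "(\<lambda>_. 0) \<in> ConstSpan K"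
      unfolding ConstSpan_def by (rule CollectI, rule exI[of _ 0]) simp
    ultimately show "{(\<lambda>_. 0)} \<subseteq> Sspace a b c \<inter> ConstSpan K" by simp
    show "Sspace a b c \<inter> ConstSpan K \<subseteq> {(\<lambda>_. 0)}"
    proof
      fix f assume f: "f \<in> Sspace a b c \<inter> ConstSpan K"
      then obtain \<alpha> \<beta> \<gamma> where fs: "f = (\<lambda>z. \<alpha> * sting a K z + \<beta> * sting b K z + \<gamma> * sting c K z)"
        unfolding Sspace_def Let_def K_def[symmetric] by blast
      obtain t where ft: "f = (\<lambda>z. t * ext0 K (\<lambda>_. 1) z)" using f unfolding ConstSpan_def by blast
      have g1: "f = gfun \<alpha> \<beta> \<gamma> 0" unfolding fs gfun_def sig(1) by (simp add: fun_eq_iff ext0_def)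
      have g2: "f = gfun 0 0 0 t" unfolding ft gfun_def by (simp add: fun_eq_iff ext0_def)
      have "integral K (\<lambda>z. f z * bub z) = 0"
        using gfun_test[OF bub_poly, of \<alpha> \<beta> \<gamma> 0] bub_verts unfolding g1 by simp
      moreover have "integral K (\<lambda>z. f z * bub z) = t * integral K bub"
        using gfun_test[OF bub_poly, of 0 0 0 t] unfolding g2 by simp
      ultimately have "t = 0" using bub_int_pos by simp
      then show "f \<in> {(\<lambda>_. 0)}" using ft by simp
    qed
  qed
  show "Pk 3 K = fsum (Nspace K) (fsum (Sspace a b c) (ConstSpan K))"
  proof
    show "Pk 3 K \<subseteq> fsum (Nspace K) (fsum (Sspace a b c) (ConstSpan K))" by (rule Pk_sub)
    show "fsum (Nspace K) (fsum (Sspace a b c) (ConstSpan K)) \<subseteq> Pk 3 K"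
    proof
      fix f assume "f \<in> fsum (Nspace K) (fsum (Sspace a b c) (ConstSpan K))"
      then obtain n g where f: "f = (\<lambda>z. n z + g z)" and n: "n \<in> Nspace K"
        and g: "g \<in> fsum (Sspace a b c) (ConstSpan K)" unfolding fsum_def[of "Nspace K"] by blast
      obtain q where q: "poly2 3 q" "n = ext0 K q" using N_props[OF n] by blast
      obtain \<alpha> \<beta> \<gamma> t where gg: "g = gfun \<alpha> \<beta> \<gamma> t" using g SC_iff by blast
      let ?G = "\<lambda>z. \<alpha> * Pc (sig a) z + \<beta> * Pc (sig b) z + \<gamma> * Pc (sig c) z + t"
      have G3: "poly2 3 ?G"
        by (intro poly2_add poly2_cmul poly2_Pc poly2_const)
      have "poly2 3 (\<lambda>z. q z + ?G z)" by (rule poly2_add[OF q(1) G3])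
      moreover have "f = ext0 K (\<lambda>z. q z + ?G z)" unfolding f q(2) gg gfun_def by (simp add: fun_eq_iff ext0_def)
      ultimately show "f \<in> Pk 3 K" unfolding Pk_def by blast
    qed
  qed
qed

end

theorem lemma3p2:
  fixes a b c :: pt and K :: "pt set"
  assumes "\<not> collinear {a, b, c}"
    and "K = convex hull {a, b, c}"
  shows "Pk 3 K = fsum (Nspace K) (fsum (Sspace a b c) (ConstSpan K))
    \<and> Sspace a b c \<inter> ConstSpan K = {(\<lambda>_. 0)}
    \<and> Nspace K \<inter> fsum (Sspace a b c) (ConstSpan K) = {(\<lambda>_. 0)}
    \<and> (\<forall>n\<in>Nspace K. \<forall>g\<in>fsum (Sspace a b c) (ConstSpan K).
          integral K (\<lambda>z. n z * g z) = 0)"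
proof -
  have T: "tri a b c" by unfold_locales (rule assms(1))
  have KK: "K = tri.K a b c" by (simp add: assms(2) tri.K_def[OF T])
  show ?thesis unfolding KK by (rule tri.main[OF T])
qed

end
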